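(* Let $N\ge1$, $p\in[1,\infty]$, and equip $\mathbb{R}^N$ with the $\ell^p$-metric. For every subset $F$ of $\mathbb{R}^N$ the following are equivalent: (1) $\dim_AF=\dim_A\mathbb{R}^N$; (2) $[0,1]^N\in\mathrm{pc}(F)$; (3) $[0,1]^N\in\mathrm{tpc}(F)$; (4) $[0,1]^N\in\mathrm{kpc}(F)$; (5) $F$ satisfies the asymptotic Steinhaus property for $[0,1]^N$.
   Context: All subsets carry the $\ell^p$-metric. $d_{GH}$ is the Gromov–Hausdorff distance and $uA$ ($u>0$) denotes $A$ with metric multiplied by $u$. $\dim_A Y$ (Assouad dimension) is the infimum of $\beta>0$ for which there is $C>0$ such that every bounded $S\subset Y$ can be covered, for every $r>0$, by at most $C(\delta(S)/r)^\beta$ sets of diameter at most $r$ ($\delta$ = diameter). For a metric space $Y$, $\mathrm{pc}(Y)$ is the class of metric spaces $Q$ with $d_{GH}(u_iA_i,Q)\to0$ for some subsets $A_i\subset Y$ and $u_i>0$; $\mathrm{kpc}(Y)$ is the same with all $A_i$ compact. $\mathrm{tpc}(F)$ is the class of metric spaces $Q$ with $d_{GH}(u_i(A_i\cap F),Q)\to0$ for some $u_i>0$ and some sequence of cubes $A_i$, each of the form $3^{-n}v+3^{-n}[-1/2,1/2]^N$ with $n\in\mathbb{Z}$, $v\in\mathbb{Z}^N$. $F$ satisfies the asymptotic Steinhaus property for $[0,1]^N$ if for every $\epsilon>0$ and finite $S\subset[0,1]^N$ there exist finite $T\subset F$ and $\delta>0$ with $d_{GH}(T,\delta S)\le\delta\epsilon$.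 *)

theory Defs
  imports "HOL-Analysis.Analysis"
begin

definition lp_dist :: "ereal \<Rightarrow> real ^ ('n::finite) \<Rightarrow> real ^ 'n \<Rightarrow> real" where
  "lp_dist p x y =
     (if p = \<infinity> then Max (range (\<lambda>i. \<bar>x $ i - y $ i\<bar>))
      else (\<Sum>i\<in>UNIV. \<bar>x $ i - y $ i\<bar> powr real_of_ereal p) powr (1 / real_of_ereal p))"

definition lp_diam :: "ereal \<Rightarrow> (real ^ ('n::finite)) set \<Rightarrow> real" where
  "lp_diam p S = (if S = {} then 0 else Sup {lp_dist p x y | x y. x \<in> S \<and> y \<in> S})"

definition lp_bounded :: "ereal \<Rightarrow> (real ^ ('n::finite)) set \<Rightarrow> bool" where
  "lp_bounded p S \<longleftrightarrow> (\<exists>R. \<forall>x\<in>S. \<forall>y\<in>S. lp_dist p x y \<le> R)"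

definition assouad_dim :: "ereal \<Rightarrow> (real ^ ('n::finite)) set \<Rightarrow> ereal" where
  "assouad_dim p Y = Inf (ereal ` {\<beta>. \<beta> > 0 \<and> (\<exists>C>0. \<forall>S. S \<subseteq> Y \<and> lp_bounded p S \<longrightarrow>
       (\<forall>r. 0 < r \<and> r \<le> lp_diam p S \<longrightarrow>
          (\<exists>\<U>. finite \<U> \<and> S \<subseteq> \<Union>\<U> \<and> (\<forall>U\<in>\<U>. U \<subseteq> Y \<and> lp_bounded p U \<and> lp_diam p U \<le> r) \<and>
               real (card \<U>) \<le> C * (lp_diam p S / r) powr \<beta>)))})"

definition metric_on :: "'a set \<Rightarrow> ('a \<Rightarrow> 'a \<Rightarrow> real) \<Rightarrow> bool" where
  "metric_on X d \<longleftrightarrow>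
     (\<forall>x\<in>X. \<forall>y\<in>X. 0 \<le> d x y \<and> (d x y = 0 \<longleftrightarrow> x = y) \<and> d x y = d y x) \<and>
     (\<forall>x\<in>X. \<forall>y\<in>X. \<forall>z\<in>X. d x z \<le> d x y + d y z)"

definition hausdorff_dist :: "('c \<Rightarrow> 'c \<Rightarrow> real) \<Rightarrow> 'c set \<Rightarrow> 'c set \<Rightarrow> ereal" where
  "hausdorff_dist D A B = Inf {ereal r | r. r > 0 \<and>
       (\<forall>a\<in>A. \<exists>b\<in>B. D a b < r) \<and> (\<forall>b\<in>B. \<exists>a\<in>A. D a b < r)}"

text \<open>Gromov--Hausdorff distance (BBI Def. 7.3.10 in the form of Remark 7.3.12):
  infimum of Hausdorff distances over metrics on the disjoint union extending both metrics.\<close>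

definition GH_dist :: "'a set \<Rightarrow> ('a \<Rightarrow> 'a \<Rightarrow> real) \<Rightarrow> 'b set \<Rightarrow> ('b \<Rightarrow> 'b \<Rightarrow> real) \<Rightarrow> ereal" where
  "GH_dist X dX Y dY = Inf {hausdorff_dist D (Inl ` X) (Inr ` Y) | D.
       metric_on (Inl ` X \<union> Inr ` Y) D \<and>
       (\<forall>x\<in>X. \<forall>x'\<in>X. D (Inl x) (Inl x') = dX x x') \<and>
       (\<forall>y\<in>Y. \<forall>y'\<in>Y. D (Inr y) (Inr y') = dY y y')}"

definition unit_cube :: "(real ^ ('n::finite)) set" where
  "unit_cube = cbox 0 1"

definition in_pc :: "ereal \<Rightarrow> (real ^ ('n::finite)) set \<Rightarrow> bool" where
  "in_pc p F \<longleftrightarrow> (\<exists>(A :: nat \<Rightarrow> (real ^ 'n) set) (u :: nat \<Rightarrow> real).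
      (\<forall>i. A i \<subseteq> F \<and> u i > 0) \<and>
      (\<lambda>i. GH_dist (A i) (\<lambda>x y. u i * lp_dist p x y) (unit_cube :: (real ^ 'n) set) (lp_dist p)) \<longlonglongrightarrow> 0)"

definition in_kpc :: "ereal \<Rightarrow> (real ^ ('n::finite)) set \<Rightarrow> bool" where
  "in_kpc p F \<longleftrightarrow> (\<exists>(A :: nat \<Rightarrow> (real ^ 'n) set) (u :: nat \<Rightarrow> real).
      (\<forall>i. A i \<subseteq> F \<and> compact (A i) \<and> u i > 0) \<and>
      (\<lambda>i. GH_dist (A i) (\<lambda>x y. u i * lp_dist p x y) (unit_cube :: (real ^ 'n) set) (lp_dist p)) \<longlonglongrightarrow> 0)"

definition triadic_cube :: "int \<Rightarrow> int ^ ('n::finite) \<Rightarrow> (real ^ 'n) set" where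
  "triadic_cube n v = {x. \<forall>i. \<bar>x $ i - 3 powr (- real_of_int n) * real_of_int (v $ i)\<bar>
                                  \<le> 3 powr (- real_of_int n) / 2}"

definition in_tpc :: "ereal \<Rightarrow> (real ^ ('n::finite)) set \<Rightarrow> bool" where
  "in_tpc p F \<longleftrightarrow> (\<exists>(n :: nat \<Rightarrow> int) (v :: nat \<Rightarrow> int ^ 'n) (u :: nat \<Rightarrow> real).
      (\<forall>i. u i > 0) \<and>
      (\<lambda>i. GH_dist (triadic_cube (n i) (v i) \<inter> F) (\<lambda>x y. u i * lp_dist p x y)
                    (unit_cube :: (real ^ 'n) set) (lp_dist p)) \<longlonglongrightarrow> 0)"

definition asymptotic_steinhaus :: "ereal \<Rightarrow> (real ^ ('n::finite)) set \<Rightarrow> bool" where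
  "asymptotic_steinhaus p F \<longleftrightarrow> (\<forall>\<epsilon>>0. \<forall>S. finite S \<and> S \<subseteq> (unit_cube :: (real ^ 'n) set) \<longrightarrow>
      (\<exists>T \<delta>. finite T \<and> T \<subseteq> F \<and> \<delta> > 0 \<and>
          GH_dist T (lp_dist p) S (\<lambda>x y. \<delta> * lp_dist p x y) \<le> ereal (\<delta> * \<epsilon>)))"

end

theory Submission
  imports Defs
begin


lemma powr_convex2:
  fixes q a b t :: real
  assumes q: "q \<ge> 1" and a: "a \<ge> 0" and b: "b \<ge> 0" and t: "0 \<le> t" "t \<le> 1"
  shows "((1 - t) * a + t * b) powr q \<le> (1 - t) * a powr q + t * b powr q"
proof (cases "a = 0 \<or> b = 0")
  case False
  then have "a > 0" "b > 0" using a b by auto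
  then show ?thesis using convex_onD[OF powr_convex[OF q], of t a b] t by simp
next
  case True
  have tq: "t powr q \<le> t" using powr_mono'[of 1 q t] t q by simp
  have tq': "(1-t) powr q \<le> (1-t)" using powr_mono'[of 1 q "1-t"] t q by simp
  show ?thesis
  proof (cases "a = 0")
    case True
    have "((1 - t) * a + t * b) powr q = t powr q * b powr q" using True t b by (simp add: powr_mult)
    also have "\<dots> \<le> t * b powr q" using tq by (simp add: mult_right_mono)
    finally show ?thesis using True q by simp
  next
    case False
    then have "b = 0" using \<open>a = 0 \<or> b = 0\<close> by simp
    have "((1 - t) * a + t * b) powr q = (1-t) powr q * a powr q" using \<open>b=0\<close> t a by (simp add: powr_mult)
    also have "\<dots> \<le> (1-t) * a powr q" using tq' by (simp add: mult_right_mono)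
    finally show ?thesis using \<open>b=0\<close> q by simp
  qed
qed



lemma minkowski:
  fixes a b :: "'i \<Rightarrow> real" and q :: real
  assumes I: "finite I" and q: "q \<ge> 1"
  shows "(\<Sum>i\<in>I. \<bar>a i + b i\<bar> powr q) powr (1/q)
     \<le> (\<Sum>i\<in>I. \<bar>a i\<bar> powr q) powr (1/q) + (\<Sum>i\<in>I. \<bar>b i\<bar> powr q) powr (1/q)"
proof -
  define SA where "SA = (\<Sum>i\<in>I. \<bar>a i\<bar> powr q)"
  define SB where "SB = (\<Sum>i\<in>I. \<bar>b i\<bar> powr q)"
  define A where "A = SA powr (1/q)"
  define B where "B = SB powr (1/q)"
  have SA0: "SA \<ge> 0" "SB \<ge> 0" unfolding SA_def SB_def by (auto intro: sum_nonneg)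
  have A0: "A \<ge> 0" "B \<ge> 0" unfolding A_def B_def by auto
  have Aq: "A powr q = SA" unfolding A_def using q SA0 by (simp add: powr_powr)
  have Bq: "B powr q = SB" unfolding B_def using q SA0 by (simp add: powr_powr)
  show ?thesis
  proof (cases "A = 0 \<or> B = 0")
    case True
    then show ?thesis
    proof
      assume "A = 0"
      then have "SA = 0" using Aq q by simp
      then have "\<forall>i\<in>I. \<bar>a i\<bar> powr q = 0" unfolding SA_def using I by (subst (asm) sum_nonneg_eq_0_iff) auto
      then have "\<forall>i\<in>I. a i = 0" by simp
      then show ?thesis by (simp add: SB_def[symmetric] B_def[symmetric] A0)
    next
      assume "B = 0"
      then have "SB = 0" using Bq q by simp
      then have "\<forall>i\<in>I. \<bar>b i\<bar> powr q = 0" unfolding SB_def using I by (subst (asm) sum_nonneg_eq_0_iff) auto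
      then have "\<forall>i\<in>I. b i = 0" by simp
      then show ?thesis by (simp add: SA_def[symmetric] A_def[symmetric] A0)
    qed
  next
    case False
    then have Ap: "A > 0" "B > 0" using A0 by auto
    define t where "t = B / (A + B)"
    have t: "0 \<le> t" "t \<le> 1" "1 - t = A / (A + B)" using Ap unfolding t_def by (auto simp: field_simps)
    have pt: "\<bar>a i + b i\<bar> powr q \<le> (A + B) powr q * ((1 - t) * (\<bar>a i\<bar> powr q / SA) + t * (\<bar>b i\<bar> powr q / SB))" for i
    proof -
      have e: "\<bar>a i\<bar> + \<bar>b i\<bar> = (A + B) * ((1 - t) * (\<bar>a i\<bar> / A) + t * (\<bar>b i\<bar> / B))"
      proof -
        have "(A + B) * ((1 - t) * (\<bar>a i\<bar> / A)) = \<bar>a i\<bar>" using Ap unfolding t(3) by simp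
        moreover have "(A + B) * (t * (\<bar>b i\<bar> / B)) = \<bar>b i\<bar>" using Ap unfolding t_def by simp
        ultimately show ?thesis by (simp add: distrib_left)
      qed
      have "\<bar>a i + b i\<bar> powr q \<le> (\<bar>a i\<bar> + \<bar>b i\<bar>) powr q"
        using q by (intro powr_mono2) auto
      also have "\<dots> = (A + B) powr q * ((1 - t) * (\<bar>a i\<bar> / A) + t * (\<bar>b i\<bar> / B)) powr q"
        unfolding e using Ap t by (subst powr_mult) auto
      also have "\<dots> \<le> (A + B) powr q * ((1 - t) * (\<bar>a i\<bar> / A) powr q + t * (\<bar>b i\<bar> / B) powr q)"
        using Ap t q by (intro mult_left_mono powr_convex2) auto
      also have "\<dots> = (A + B) powr q * ((1 - t) * (\<bar>a i\<bar> powr q / SA) + t * (\<bar>b i\<bar> powr q / SB))"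
        using Ap by (simp add: powr_divide Aq Bq)
      finally show ?thesis .
    qed
    have SAp: "SA > 0" "SB > 0" using Ap Aq Bq by auto
    have gen: "(\<Sum>i\<in>I. c1 * \<bar>a i\<bar> powr q + c2 * \<bar>b i\<bar> powr q) = c1 * SA + c2 * SB" for c1 c2
      unfolding SA_def SB_def by (simp add: sum.distrib sum_distrib_left)
    have "(\<Sum>i\<in>I. \<bar>a i + b i\<bar> powr q) \<le> (\<Sum>i\<in>I. (A + B) powr q * ((1 - t) * (\<bar>a i\<bar> powr q / SA) + t * (\<bar>b i\<bar> powr q / SB)))"
      by (intro sum_mono pt)
    also have "\<dots> = (\<Sum>i\<in>I. ((A + B) powr q * ((1 - t) / SA)) * \<bar>a i\<bar> powr q + ((A + B) powr q * (t / SB)) * \<bar>b i\<bar> powr q)"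
      by (rule sum.cong) (simp_all add: algebra_simps)
    also have "\<dots> = ((A + B) powr q * ((1 - t) / SA)) * SA + ((A + B) powr q * (t / SB)) * SB"
      using gen .
    also have "\<dots> = (A + B) powr q" using SAp by (simp add: field_simps)
    finally have "(\<Sum>i\<in>I. \<bar>a i + b i\<bar> powr q) powr (1/q) \<le> ((A + B) powr q) powr (1/q)"
      using q by (intro powr_mono2) (auto intro: sum_nonneg)
    also have "\<dots> = A + B" using q Ap by (simp add: powr_powr)
    finally show ?thesis unfolding A_def B_def SA_def SB_def .
  qed
qed



lemma q_ge1: "1 \<le> p \<Longrightarrow> p \<noteq> \<infinity> \<Longrightarrow> 1 \<le> real_of_ereal (p::ereal)"
  by (cases p) auto

lemma lp_coord:
  fixes x y :: "real ^ 'n"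
  assumes p: "1 \<le> p"
  shows "\<bar>x $ i - y $ i\<bar> \<le> lp_dist p x y"
proof (cases "p = \<infinity>")
  case True
  then show ?thesis unfolding lp_dist_def by (simp add: Max_ge)
next
  case False
  define q where "q = real_of_ereal p"
  have q: "q \<ge> 1" using q_ge1[OF p False] q_def by simp
  have "\<bar>x $ i - y $ i\<bar> = (\<bar>x $ i - y $ i\<bar> powr q) powr (1/q)" using q by (simp add: powr_powr)
  also have "\<dots> \<le> (\<Sum>j\<in>UNIV. \<bar>x $ j - y $ j\<bar> powr q) powr (1/q)"
    using q by (intro powr_mono2 member_le_sum) auto
  finally show ?thesis using False unfolding lp_dist_def q_def by simp
qed

lemma lp_nonneg: "0 \<le> lp_dist p x y"
  unfolding lp_dist_def
  by (auto intro!: order.trans[OF _ Max_ge[of _ "\<bar>x $ undefined - y $ undefined\<bar>"]])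

lemma lp_sym: "lp_dist p x y = lp_dist p y x"
  unfolding lp_dist_def by (simp add: abs_minus_commute)

lemma lp_le_bound:
  fixes x y :: "real ^ 'n"
  assumes p: "1 \<le> p" and a: "0 \<le> a" and b: "\<And>i. \<bar>x $ i - y $ i\<bar> \<le> a"
  shows "lp_dist p x y \<le> real CARD('n) * a"
proof (cases "p = \<infinity>")
  case True
  have N: "real CARD('n) \<ge> 1" by simp
  have "Max (range (\<lambda>i. \<bar>x $ i - y $ i\<bar>)) \<le> a" using b by (simp add: Max_le_iff)
  also have "a \<le> real CARD('n) * a" using N a by (simp add: mult_le_cancel_right1)
  finally show ?thesis using True unfolding lp_dist_def by simp
next
  case False
  define q where "q = real_of_ereal p"
  have q: "q \<ge> 1" using q_ge1[OF p False] q_def by simp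
  have N: "real CARD('n) \<ge> 1" by simp
  have "(\<Sum>j\<in>UNIV. \<bar>x $ j - y $ j\<bar> powr q) \<le> (\<Sum>j\<in>(UNIV::'n set). a powr q)"
    using q b by (intro sum_mono powr_mono2) auto
  also have "\<dots> = real CARD('n) * a powr q" by simp
  finally have "(\<Sum>j\<in>UNIV. \<bar>x $ j - y $ j\<bar> powr q) powr (1/q) \<le> (real CARD('n) * a powr q) powr (1/q)"
    using q by (intro powr_mono2) (auto intro: sum_nonneg)
  also have "\<dots> = real CARD('n) powr (1/q) * a" using q a by (simp add: powr_mult powr_powr)
  also have "\<dots> \<le> real CARD('n) * a"
  proof -
    have "real CARD('n) powr (1/q) \<le> real CARD('n) powr 1" using q N by (intro powr_mono) auto
    then show ?thesis using a by (simp add: mult_right_mono)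
  qed
  finally show ?thesis using False unfolding lp_dist_def q_def by simp
qed

lemma lp_eq0:
  fixes x y :: "real ^ 'n"
  assumes p: "1 \<le> p"
  shows "lp_dist p x y = 0 \<longleftrightarrow> x = y"
proof
  assume "lp_dist p x y = 0"
  then have "\<bar>x $ i - y $ i\<bar> \<le> 0" for i using lp_coord[OF p, of x i y] by simp
  then show "x = y" by (simp add: vec_eq_iff)
next
  assume "x = y"
  then show "lp_dist p x y = 0" using lp_le_bound[OF p, of 0 x y] lp_nonneg[of p x y] by simp
qed

lemma lp_affine:
  fixes x y b :: "real ^ 'n"
  assumes p: "1 \<le> p"
  shows "lp_dist p (c *\<^sub>R x + b) (c *\<^sub>R y + b) = \<bar>c\<bar> * lp_dist p x y"
proof -
  have cd: "(c *\<^sub>R x + b) $ i - (c *\<^sub>R y + b) $ i = c * (x $ i - y $ i)" for i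
    by (simp add: algebra_simps)
  show ?thesis
proof (cases "p = \<infinity>")
  case True
  have e: "range (\<lambda>i. \<bar>(c *\<^sub>R x + b) $ i - (c *\<^sub>R y + b) $ i\<bar>) = (\<lambda>t. \<bar>c\<bar> * t) ` range (\<lambda>i. \<bar>x $ i - y $ i\<bar>)"
    unfolding cd abs_mult by (simp add: image_image)
  have "Max ((\<lambda>t. \<bar>c\<bar> * t) ` range (\<lambda>i. \<bar>x $ i - y $ i\<bar>)) = \<bar>c\<bar> * Max (range (\<lambda>i. \<bar>x $ i - y $ i\<bar>))"
    by (rule mono_Max_commute[symmetric]) (auto simp: mono_def mult_left_mono)
  then show ?thesis using True e unfolding lp_dist_def by simp
next
  case False
  define q where "q = real_of_ereal p"
  have q: "q \<ge> 1" using q_ge1[OF p False] q_def by simp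
  have "(\<Sum>j\<in>UNIV. \<bar>(c *\<^sub>R x + b) $ j - (c *\<^sub>R y + b) $ j\<bar> powr q) = (\<Sum>j\<in>UNIV. \<bar>c\<bar> powr q * \<bar>x $ j - y $ j\<bar> powr q)"
    unfolding cd by (rule sum.cong) (auto simp: abs_mult powr_mult)
  also have "\<dots> = \<bar>c\<bar> powr q * (\<Sum>j\<in>UNIV. \<bar>x $ j - y $ j\<bar> powr q)" by (simp add: sum_distrib_left)
  finally have "(\<Sum>j\<in>UNIV. \<bar>(c *\<^sub>R x + b) $ j - (c *\<^sub>R y + b) $ j\<bar> powr q) powr (1/q)
      = \<bar>c\<bar> * (\<Sum>j\<in>UNIV. \<bar>x $ j - y $ j\<bar> powr q) powr (1/q)"
    using q by (simp add: powr_mult powr_powr sum_nonneg)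
  then show ?thesis using False unfolding lp_dist_def q_def by simp
qed
qed

lemma lp_triangle:
  fixes x y z :: "real ^ 'n"
  assumes p: "1 \<le> p"
  shows "lp_dist p x z \<le> lp_dist p x y + lp_dist p y z"
proof (cases "p = \<infinity>")
  case True
  have "\<bar>x $ i - z $ i\<bar> \<le> lp_dist p x y + lp_dist p y z" for i
    using lp_coord[OF p, of x i y] lp_coord[OF p, of y i z] by linarith
  then show ?thesis using True unfolding lp_dist_def[of p x z] by (simp add: Max_le_iff)
next
  case False
  define q where "q = real_of_ereal p"
  have q: "q \<ge> 1" using q_ge1[OF p False] q_def by simp
  have "x $ i - z $ i = (x $ i - y $ i) + (y $ i - z $ i)" for i by simp
  then show ?thesis using minkowski[OF _ q, of UNIV "\<lambda>i. x $ i - y $ i" "\<lambda>i. y $ i - z $ i"] False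
    unfolding lp_dist_def q_def by simp
qed

lemma lp_metric: "1 \<le> p \<Longrightarrow> metric_on (X :: (real^'n) set) (lp_dist p)"
  unfolding metric_on_def
proof (intro conjI ballI)
  fix x y z :: "real^'n" assume p: "1 \<le> p"
  show "0 \<le> lp_dist p x y" by (rule lp_nonneg)
  show "(lp_dist p x y = 0) = (x = y)" by (rule lp_eq0[OF p])
  show "lp_dist p x y = lp_dist p y x" by (rule lp_sym)
  show "lp_dist p x z \<le> lp_dist p x y + lp_dist p y z" by (rule lp_triangle[OF p])
qed

lemma lp_metric_scaled: "1 \<le> p \<Longrightarrow> u > 0 \<Longrightarrow> metric_on (X :: (real^'n) set) (\<lambda>x y. u * lp_dist p x y)"
  unfolding metric_on_def
proof (intro conjI ballI)
  fix x y z :: "real^'n" assume p: "1 \<le> p" and u: "u > 0"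
  show "0 \<le> u * lp_dist p x y" using u lp_nonneg[of p x y] by simp
  show "(u * lp_dist p x y = 0) = (x = y)" using lp_eq0[OF p] u by simp
  show "u * lp_dist p x y = u * lp_dist p y x" by (simp add: lp_sym[of p x y])
  show "u * lp_dist p x z \<le> u * lp_dist p x y + u * lp_dist p y z"
    using lp_triangle[OF p, of x z y] u by (simp add: distrib_left[symmetric])
qed



definition sc :: "int \<Rightarrow> real" where "sc n = 3 powr (- real_of_int n)"

lemma sc_pos: "sc n > 0" unfolding sc_def by simp

lemma sc_add: "sc (n + int k) = sc n / 3 ^ k"
proof -
  have "sc (n + int k) = 3 powr (- real_of_int n) * 3 powr (- real k)"
    unfolding sc_def by (simp add: powr_add[symmetric])
  also have "3 powr (- real k) = 1 / 3 ^ k" by (simp add: powr_minus powr_realpow divide_inverse)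
  finally show ?thesis unfolding sc_def by simp
qed

lemma sc_add1: "sc (n + 1) = sc n / 3"
  using sc_add[of n 1] by simp

lemma triadic_cube_iff: "x \<in> triadic_cube n v \<longleftrightarrow> (\<forall>i. \<bar>x $ i - sc n * real_of_int (v $ i)\<bar> \<le> sc n / 2)"
  unfolding triadic_cube_def sc_def by simp

definition hk :: "nat \<Rightarrow> int" where "hk k = ((3::int) ^ k - 1) div 2"

lemma hk: "2 * hk k + 1 = 3 ^ k"
proof -
  have "odd ((3::int) ^ k)" by simp
  then have "even ((3::int) ^ k - 1)" by simp
  then have "2 * (((3::int) ^ k - 1) div 2) = 3 ^ k - 1" by (rule even_two_times_div_two)
  then show ?thesis unfolding hk_def by simp
qed

lemma hk_real: "real_of_int (hk k) = (3 ^ k - 1) / 2"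
proof -
  have "real_of_int (2 * hk k + 1) = real_of_int (3 ^ k)" using hk[of k] by simp
  then show ?thesis by simp
qed

lemma hk_nonneg: "hk k \<ge> 0"
  using hk[of k] by (smt (verit) one_le_power)

definition Rk :: "nat \<Rightarrow> (int ^ 'n) set" where
  "Rk k = vec_lambda ` (PiE UNIV (\<lambda>_. {- hk k .. hk k}))"

lemma Rk_iff: "w \<in> Rk k \<longleftrightarrow> (\<forall>i. \<bar>w $ i\<bar> \<le> hk k)"
proof
  assume "w \<in> Rk k"
  then obtain g where g: "g \<in> PiE UNIV (\<lambda>_. {- hk k .. hk k})" "w = vec_lambda g" unfolding Rk_def by auto
  show "\<forall>i. \<bar>w $ i\<bar> \<le> hk k"
  proof
    fix i
    have "- hk k \<le> g i" "g i \<le> hk k" using g(1) by (auto simp: PiE_iff)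
    then show "\<bar>w $ i\<bar> \<le> hk k" using g(2) by simp
  qed
next
  assume a: "\<forall>i. \<bar>w $ i\<bar> \<le> hk k"
  have "w $ i \<in> {- hk k .. hk k}" for i
  proof -
    have "\<bar>w $ i\<bar> \<le> hk k" using a by simp
    then show ?thesis by (auto simp: abs_le_iff)
  qed
  then have "(\<lambda>i. w $ i) \<in> PiE UNIV (\<lambda>_. {- hk k .. hk k})" by (auto simp: PiE_iff)
  then show "w \<in> Rk k" unfolding Rk_def by (rule rev_image_eqI) simp
qed

lemma Rk_finite: "finite (Rk k :: (int ^ 'n::finite) set)"
  unfolding Rk_def by (intro finite_imageI finite_PiE) auto

lemma Rk_card: "card (Rk k :: (int ^ 'n::finite) set) \<le> 3 ^ (k * CARD('n))"
proof -
  have "card (Rk k :: (int ^ 'n) set) \<le> card (PiE (UNIV::'n set) (\<lambda>_. {- hk k .. hk k}))"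
    unfolding Rk_def by (rule card_image_le) (intro finite_PiE, auto)
  also have "\<dots> = (nat (2 * hk k + 1)) ^ CARD('n)" by (simp add: card_PiE)
  also have "\<dots> = 3 ^ (k * CARD('n))" unfolding hk by (simp add: nat_power_eq power_mult)
  finally show ?thesis .
qed

lemma Rk_zero: "0 \<in> Rk k"
  unfolding Rk_iff using hk_nonneg by simp

lemma box_cover:
  fixes x :: "real ^ 'n" and u :: "int ^ 'n"
  assumes a: "\<And>i. \<bar>x $ i - sc m * real_of_int (u $ i)\<bar> \<le> sc m * 3 ^ k / 2"
  shows "\<exists>w\<in>Rk k. x \<in> triadic_cube m (u + w)"
proof -
  define t where "t i = (x $ i - sc m * real_of_int (u $ i)) / sc m" for i
  have s: "sc m > 0" by (rule sc_pos)
  have tb: "\<bar>t i\<bar> \<le> 3 ^ k / 2" for i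
    using a[of i] s unfolding t_def by (simp add: abs_divide pos_divide_le_eq[OF s] algebra_simps)
  define w where "w = (\<chi> i. min (hk k) \<lfloor>t i + 1/2\<rfloor>)"
  have hr: "real_of_int (hk k) = (3 ^ k - 1) / 2" by (rule hk_real)
  have wi: "\<bar>t i - real_of_int (w $ i)\<bar> \<le> 1/2 \<and> \<bar>w $ i\<bar> \<le> hk k" for i
  proof (cases "\<lfloor>t i + 1/2\<rfloor> \<le> hk k")
    case True
    define F where "F = \<lfloor>t i + 1/2\<rfloor>"
    then have wi: "w $ i = F" unfolding w_def using True by simp
    have f1: "real_of_int F \<le> t i + 1/2" unfolding F_def by (rule of_int_floor_le)
    have f2: "t i + 1/2 < real_of_int F + 1" unfolding F_def by (rule real_of_int_floor_add_one_gt)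
    have t1: "- (3 ^ k / 2) \<le> t i" using tb[of i] abs_ge_minus_self[of "t i"] by linarith
    have "real_of_int F > - real_of_int (hk k) - 1" using f2 hr t1 by (simp add: field_simps)
    then have "F \<ge> - hk k" by linarith
    moreover have "t i - real_of_int F \<le> 1/2" "real_of_int F - t i \<le> 1/2" using f1 f2 by linarith+
    ultimately have A: "\<bar>t i - real_of_int F\<bar> \<le> 1/2" "\<bar>F\<bar> \<le> hk k"
      using True unfolding F_def[symmetric] by (smt (verit))+
    show ?thesis using A wi by simp
  next
    case False
    then have wi: "w $ i = hk k" unfolding w_def by simp
    have "real_of_int (hk k + 1) \<le> t i + 1/2" using False
      by (metis floor_le_iff not_le of_int_1 of_int_add zle_add1_eq_le le_floor_iff)
    moreover have "t i \<le> 3 ^ k / 2" using tb[of i] abs_ge_self[of "t i"] by linarith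
    ultimately have a1: "real_of_int (hk k) + 1 \<le> t i + 1/2" "t i \<le> 3 ^ k / 2" by simp_all
    have "t i \<le> real_of_int (hk k) + 1/2" using a1 hr by (simp add: field_simps)
    moreover have "real_of_int (hk k) + 1/2 \<le> t i" using a1 hr by (simp add: field_simps)
    ultimately have "t i = real_of_int (hk k) + 1/2" by (rule antisym)
    then show ?thesis using wi hk_nonneg by simp
  qed
  have "w \<in> Rk k" unfolding Rk_iff using wi by simp
  moreover have "x \<in> triadic_cube m (u + w)"
    unfolding triadic_cube_iff
  proof
    fix i
    have "x $ i - sc m * real_of_int ((u + w) $ i) = sc m * (t i - real_of_int (w $ i))"
      using s unfolding t_def by (simp add: field_simps)
    then show "\<bar>x $ i - sc m * real_of_int ((u + w) $ i)\<bar> \<le> sc m / 2"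
      using wi[of i] s by (simp add: abs_mult mult_left_mono[of _ "1/2" "sc m", simplified])
  qed
  ultimately show ?thesis by blast
qed

definition chi :: "nat \<Rightarrow> int ^ 'n \<Rightarrow> int ^ 'n \<Rightarrow> int ^ 'n" where
  "chi k v w = (\<chi> i. 3 ^ k * v $ i + w $ i)"

lemma children_cover:
  fixes x :: "real ^ 'n" and v :: "int ^ 'n"
  assumes "x \<in> triadic_cube n v"
  shows "\<exists>w\<in>Rk k. x \<in> triadic_cube (n + int k) (chi k v w)"
proof -
  define u :: "int ^ 'n" where "u = (\<chi> i. 3 ^ k * v $ i)"
  have "\<bar>x $ i - sc (n + int k) * real_of_int (u $ i)\<bar> \<le> sc (n + int k) * 3 ^ k / 2" for i
    using assms unfolding triadic_cube_iff sc_add u_def by simp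
  from box_cover[OF this] obtain w where "w \<in> Rk k" "x \<in> triadic_cube (n + int k) (u + w)" by blast
  moreover have "u + w = chi k v w" unfolding u_def chi_def by (simp add: vec_eq_iff)
  ultimately show ?thesis by auto
qed

lemma child_sub:
  fixes v :: "int ^ 'n"
  assumes w: "w \<in> Rk k"
  shows "triadic_cube (n + int k) (chi k v w) \<subseteq> triadic_cube n v"
proof
  fix x assume x: "x \<in> triadic_cube (n + int k) (chi k v w)"
  have s: "sc n > 0" by (rule sc_pos)
  have p3: "(3::real) ^ k > 0" by simp
  show "x \<in> triadic_cube n v" unfolding triadic_cube_iff
  proof
    fix i
    have a: "\<bar>x $ i - sc n / 3 ^ k * (3 ^ k * real_of_int (v $ i) + real_of_int (w $ i))\<bar> \<le> sc n / 3 ^ k / 2"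
      using x unfolding triadic_cube_iff sc_add chi_def by simp
    have b: "\<bar>real_of_int (w $ i)\<bar> \<le> (3 ^ k - 1) / 2" using w unfolding Rk_iff hk_real[symmetric]
      by (metis of_int_abs of_int_le_iff)
    have e: "x $ i - sc n * real_of_int (v $ i) = (x $ i - sc n / 3 ^ k * (3 ^ k * real_of_int (v $ i) + real_of_int (w $ i))) + sc n / 3 ^ k * real_of_int (w $ i)"
      using p3 by (simp add: field_simps)
    have c: "\<bar>sc n / 3 ^ k\<bar> = sc n / 3 ^ k" using s p3 by simp
    have "\<bar>sc n / 3 ^ k * real_of_int (w $ i)\<bar> \<le> sc n / 3 ^ k * ((3 ^ k - 1) / 2)"
      unfolding abs_mult c by (rule mult_left_mono[OF b]) (use s p3 in simp)
    then have "\<bar>x $ i - sc n * real_of_int (v $ i)\<bar> \<le> sc n / 3 ^ k / 2 + sc n / 3 ^ k * ((3 ^ k - 1) / 2)"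
      unfolding e using a by linarith
    also have "\<dots> = sc n / 2" using p3 by (simp add: field_simps)
    finally show "\<bar>x $ i - sc n * real_of_int (v $ i)\<bar> \<le> sc n / 2" .
  qed
qed

lemma cube_coord:
  fixes x y :: "real ^ 'n"
  assumes "x \<in> triadic_cube n v" "y \<in> triadic_cube n v"
  shows "\<bar>x $ i - y $ i\<bar> \<le> sc n"
proof -
  have a: "\<bar>x $ i - sc n * real_of_int (v $ i)\<bar> \<le> sc n / 2" "\<bar>y $ i - sc n * real_of_int (v $ i)\<bar> \<le> sc n / 2"
    using assms unfolding triadic_cube_iff by auto
  then have "x $ i - y $ i \<le> sc n" "y $ i - x $ i \<le> sc n" unfolding abs_le_iff by linarith+
  then show ?thesis by (simp add: abs_le_iff)
qed

lemma cube_lp: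
  fixes x y :: "real ^ 'n"
  assumes p: "1 \<le> p" and "x \<in> triadic_cube n v" "y \<in> triadic_cube n v"
  shows "lp_dist p x y \<le> real CARD('n) * sc n"
  using lp_le_bound[OF p, of "sc n" x y] cube_coord[OF assms(2,3)] sc_pos[of n] by simp

lemma cube_bounded:
  assumes p: "1 \<le> p"
  shows "lp_bounded p (triadic_cube n v \<inter> (Y :: (real ^ 'n) set))"
  unfolding lp_bounded_def
proof (intro exI ballI)
  fix x y assume "x \<in> triadic_cube n v \<inter> Y" "y \<in> triadic_cube n v \<inter> Y"
  then show "lp_dist p x y \<le> real CARD('n) * sc n" using cube_lp[OF p] by blast
qed



lemma hausdorff_nonneg: "0 \<le> hausdorff_dist D A B"
  unfolding hausdorff_dist_def by (rule Inf_greatest) auto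

lemma GH_nonneg: "0 \<le> GH_dist X dX Y dY"
  unfolding GH_dist_def by (rule Inf_greatest) (auto intro: hausdorff_nonneg)

lemma GH_common:
  fixes X :: "'a set" and Y :: "'b set" and Z :: "'c set"
    and \<alpha> :: "'a \<Rightarrow> 'c" and \<beta> :: "'b \<Rightarrow> 'c"
  assumes mZ: "metric_on Z dZ" and aZ: "\<alpha> ` X \<subseteq> Z" and bZ: "\<beta> ` Y \<subseteq> Z"
    and dX: "\<And>x x'. x \<in> X \<Longrightarrow> x' \<in> X \<Longrightarrow> dX x x' = dZ (\<alpha> x) (\<alpha> x')"
    and dY: "\<And>y y'. y \<in> Y \<Longrightarrow> y' \<in> Y \<Longrightarrow> dY y y' = dZ (\<beta> y) (\<beta> y')"
    and ia: "inj_on \<alpha> X" and ib: "inj_on \<beta> Y" and e: "e \<ge> 0"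
    and h1: "\<And>x. x \<in> X \<Longrightarrow> \<exists>y\<in>Y. dZ (\<alpha> x) (\<beta> y) \<le> e"
    and h2: "\<And>y. y \<in> Y \<Longrightarrow> \<exists>x\<in>X. dZ (\<alpha> x) (\<beta> y) \<le> e"
  shows "GH_dist X dX Y dY \<le> ereal e"
proof (rule ereal_le_epsilon2)
  fix \<eta> :: real assume \<eta>: "0 < \<eta>"
  define \<gamma> where "\<gamma> = case_sum \<alpha> \<beta>"
  define D where "D a b = dZ (\<gamma> a) (\<gamma> b) + (if isl a = isl b then 0 else \<eta>/3)" for a b
  let ?U = "Inl ` X \<union> Inr ` Y"
  have gZ: "\<gamma> a \<in> Z" if "a \<in> ?U" for a using that aZ bZ unfolding \<gamma>_def by auto
  have mD: "metric_on ?U D"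
    unfolding metric_on_def
  proof (intro conjI ballI)
    fix a b c assume a: "a \<in> ?U" and b: "b \<in> ?U" and c: "c \<in> ?U"
    have Za: "\<gamma> a \<in> Z" "\<gamma> b \<in> Z" "\<gamma> c \<in> Z" using gZ a b c by auto
    show "0 \<le> D a b" unfolding D_def using mZ Za \<eta> unfolding metric_on_def by auto
    show "D a b = D b a" unfolding D_def using mZ Za unfolding metric_on_def by auto
    show "D a c \<le> D a b + D b c"
    proof -
      have "dZ (\<gamma> a) (\<gamma> c) \<le> dZ (\<gamma> a) (\<gamma> b) + dZ (\<gamma> b) (\<gamma> c)" using mZ Za unfolding metric_on_def by blast
      moreover have "(if isl a = isl c then 0 else \<eta>/3) \<le> (if isl a = isl b then 0 else \<eta>/3) + (if isl b = isl c then 0 else \<eta>/3)"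
        using \<eta> by auto
      ultimately show ?thesis unfolding D_def by linarith
    qed
    show "(D a b = 0) = (a = b)"
    proof
      assume "a = b" then show "D a b = 0" unfolding D_def using mZ Za unfolding metric_on_def by auto
    next
      assume D0: "D a b = 0"
      have nn: "0 \<le> dZ (\<gamma> a) (\<gamma> b)" using mZ Za unfolding metric_on_def by auto
      show "a = b"
      proof (cases "isl a = isl b")
        case False then show ?thesis using D0 nn \<eta> unfolding D_def by auto
      next
        case True
        then have "dZ (\<gamma> a) (\<gamma> b) = 0" using D0 unfolding D_def by simp
        then have g: "\<gamma> a = \<gamma> b" using mZ Za unfolding metric_on_def by auto
        show ?thesis using a b True g ia ib unfolding \<gamma>_def by (auto dest: inj_onD)
      qed
    qed
  qed
  have eX: "\<forall>x\<in>X. \<forall>x'\<in>X. D (Inl x) (Inl x') = dX x x'" unfolding D_def \<gamma>_def using dX by simp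
  have eY: "\<forall>y\<in>Y. \<forall>y'\<in>Y. D (Inr y) (Inr y') = dY y y'" unfolding D_def \<gamma>_def using dY by simp
  have "hausdorff_dist D (Inl ` X) (Inr ` Y) \<le> ereal (e + \<eta>)"
    unfolding hausdorff_dist_def
  proof (rule Inf_lower, intro CollectI exI conjI)
    show "e + \<eta> > 0" using e \<eta> by simp
    show "\<forall>a\<in>(Inl ` X :: ('a+'b) set). \<exists>b\<in>(Inr ` Y :: ('a+'b) set). D a b < e + \<eta>"
    proof
      fix a :: "'a + 'b" assume "a \<in> Inl ` X"
      then obtain x where x: "x \<in> X" "a = Inl x" by auto
      obtain y where "y \<in> Y" "dZ (\<alpha> x) (\<beta> y) \<le> e" using h1[OF x(1)] by auto
      then show "\<exists>b\<in>(Inr ` Y :: ('a+'b) set). D a b < e + \<eta>" using x \<eta> unfolding D_def \<gamma>_def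
        by (intro bexI[of _ "Inr y"]) auto
    qed
    show "\<forall>b\<in>(Inr ` Y :: ('a+'b) set). \<exists>a\<in>(Inl ` X :: ('a+'b) set). D a b < e + \<eta>"
    proof
      fix b :: "'a + 'b" assume "b \<in> Inr ` Y"
      then obtain y where y: "y \<in> Y" "b = Inr y" by auto
      obtain x where "x \<in> X" "dZ (\<alpha> x) (\<beta> y) \<le> e" using h2[OF y(1)] by auto
      then show "\<exists>a\<in>(Inl ` X :: ('a+'b) set). D a b < e + \<eta>" using y \<eta> unfolding D_def \<gamma>_def
        by (intro bexI[of _ "Inl x"]) auto
    qed
  qed simp
  moreover have "GH_dist X dX Y dY \<le> hausdorff_dist D (Inl ` X) (Inr ` Y)"
    unfolding GH_dist_def by (rule Inf_lower) (use mD eX eY in blast)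
  ultimately have "GH_dist X dX Y dY \<le> ereal (e + \<eta>)" by simp
  then show "GH_dist X dX Y dY \<le> ereal e + ereal \<eta>" by simp
qed

lemma GH_extract:
  fixes X :: "'a set" and Y :: "'b set"
  assumes "GH_dist X dX Y dY < ereal e"
  shows "\<exists>f. \<forall>y\<in>Y. f y \<in> X \<and> (\<forall>y'\<in>Y. \<bar>dX (f y) (f y') - dY y y'\<bar> < 2 * e)"
proof -
  obtain h where "h \<in> {hausdorff_dist D (Inl ` X) (Inr ` Y) | D.
       metric_on (Inl ` X \<union> Inr ` Y) D \<and>
       (\<forall>x\<in>X. \<forall>x'\<in>X. D (Inl x) (Inl x') = dX x x') \<and>
       (\<forall>y\<in>Y. \<forall>y'\<in>Y. D (Inr y) (Inr y') = dY y y')}" "h < ereal e"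
    using assms unfolding GH_dist_def Inf_less_iff by blast
  then obtain D where mD: "metric_on (Inl ` X \<union> Inr ` Y) D"
    and eX: "\<forall>x\<in>X. \<forall>x'\<in>X. D (Inl x) (Inl x') = dX x x'"
    and eY: "\<forall>y\<in>Y. \<forall>y'\<in>Y. D (Inr y) (Inr y') = dY y y'"
    and hl: "hausdorff_dist D (Inl ` X) (Inr ` Y) < ereal e" by blast
  obtain r where r: "r > 0" "\<forall>a\<in>Inl ` X. \<exists>b\<in>Inr ` Y. D a b < r"
      "\<forall>b\<in>Inr ` Y. \<exists>a\<in>Inl ` X. D a b < r" "ereal r < ereal e"
    using hl unfolding hausdorff_dist_def Inf_less_iff by blast
  have "\<forall>y\<in>Y. \<exists>x. x \<in> X \<and> D (Inl x) (Inr y) < r" using r(3) by fastforce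
  then obtain f where f: "\<forall>y\<in>Y. f y \<in> X \<and> D (Inl (f y)) (Inr y) < r" by metis
  have tri: "\<And>a b c. a \<in> Inl ` X \<union> Inr ` Y \<Longrightarrow> b \<in> Inl ` X \<union> Inr ` Y \<Longrightarrow> c \<in> Inl ` X \<union> Inr ` Y \<Longrightarrow> D a c \<le> D a b + D b c"
    and sym: "\<And>a b. a \<in> Inl ` X \<union> Inr ` Y \<Longrightarrow> b \<in> Inl ` X \<union> Inr ` Y \<Longrightarrow> D a b = D b a"
    using mD unfolding metric_on_def by blast+
  show ?thesis
  proof (intro exI ballI conjI)
    fix y y' assume y: "y \<in> Y" and y': "y' \<in> Y"
    show "f y \<in> X" using f y by blast
    have fy: "f y \<in> X" "f y' \<in> X" using f y y' by auto
    have d1: "D (Inl (f y)) (Inr y) < r" "D (Inl (f y')) (Inr y') < r" using f y y' by auto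
    have s1: "D (Inr y) (Inl (f y)) = D (Inl (f y)) (Inr y)" using sym fy y by blast
    have s2: "D (Inr y') (Inl (f y')) = D (Inl (f y')) (Inr y')" using sym fy y' by blast
    have t1: "D (Inl (f y)) (Inl (f y')) \<le> D (Inl (f y)) (Inr y) + D (Inr y) (Inl (f y'))"
      using tri fy y by blast
    have t2: "D (Inr y) (Inl (f y')) \<le> D (Inr y) (Inr y') + D (Inr y') (Inl (f y'))"
      using tri fy y y' by blast
    have t3: "D (Inr y) (Inr y') \<le> D (Inr y) (Inl (f y)) + D (Inl (f y)) (Inr y')"
      using tri fy y y' by blast
    have t4: "D (Inl (f y)) (Inr y') \<le> D (Inl (f y)) (Inl (f y')) + D (Inl (f y')) (Inr y')"
      using tri fy y y' by blast
    have "dX (f y) (f y') = D (Inl (f y)) (Inl (f y'))" "dY y y' = D (Inr y) (Inr y')"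
      using eX eY fy y y' by auto
    then show "\<bar>dX (f y) (f y') - dY y y'\<bar> < 2 * e"
      using d1 s1 s2 t1 t2 t3 t4 r(4) by (simp add: abs_less_iff)
  qed
qed



lemma diam_le:
  assumes "S \<noteq> {}" "\<And>x y. x \<in> S \<Longrightarrow> y \<in> S \<Longrightarrow> lp_dist p x y \<le> R"
  shows "lp_diam p S \<le> R"
proof -
  have ne: "{lp_dist p x y | x y. x \<in> S \<and> y \<in> S} \<noteq> {}" using assms(1) by blast
  show ?thesis unfolding lp_diam_def using assms(1)
    by simp (rule cSup_least[OF ne], auto simp: assms(2))
qed

lemma diam_ge:
  assumes "lp_bounded p S" "x \<in> S" "y \<in> S"
  shows "lp_dist p x y \<le> lp_diam p S"
proof -
  obtain R where R: "\<forall>x\<in>S. \<forall>y\<in>S. lp_dist p x y \<le> R" using assms(1) unfolding lp_bounded_def by blast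
  have "bdd_above {lp_dist p x y | x y. x \<in> S \<and> y \<in> S}" using R by (auto intro!: bdd_aboveI)
  then show ?thesis unfolding lp_diam_def using assms(2,3) by (auto intro!: cSup_upper)
qed

definition asset :: "ereal \<Rightarrow> (real ^ ('n::finite)) set \<Rightarrow> real set" where
  "asset p Y = {\<beta>. \<beta> > 0 \<and> (\<exists>C>0. \<forall>S. S \<subseteq> Y \<and> lp_bounded p S \<longrightarrow>
       (\<forall>r. 0 < r \<and> r \<le> lp_diam p S \<longrightarrow>
          (\<exists>\<U>. finite \<U> \<and> S \<subseteq> \<Union>\<U> \<and> (\<forall>U\<in>\<U>. U \<subseteq> Y \<and> lp_bounded p U \<and> lp_diam p U \<le> r) \<and>
               real (card \<U>) \<le> C * (lp_diam p S / r) powr \<beta>)))}"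

lemma assouad_asset: "assouad_dim p Y = Inf (ereal ` asset p Y)"
  unfolding assouad_dim_def asset_def by simp

lemma iter_cover:
  fixes Y :: "(real ^ 'n) set"
  assumes H: "\<And>n v. \<exists>W. finite W \<and> card W \<le> K \<and> triadic_cube n v \<inter> Y \<subseteq> (\<Union>w\<in>W. triadic_cube (n + int k) w)"
  shows "\<exists>W. finite W \<and> card W \<le> K ^ j \<and> triadic_cube n v \<inter> Y \<subseteq> (\<Union>w\<in>W. triadic_cube (n + int (j * k)) w)"
proof (induction j arbitrary: n v)
  case 0
  show ?case by (intro exI[of _ "{v}"]) auto
next
  case (Suc j)
  obtain W where W: "finite W" "card W \<le> K ^ j" "triadic_cube n v \<inter> Y \<subseteq> (\<Union>w\<in>W. triadic_cube (n + int (j * k)) w)"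
    using Suc.IH by blast
  obtain g where g: "\<And>w. finite (g w) \<and> card (g w) \<le> K \<and> triadic_cube (n + int (j * k)) w \<inter> Y \<subseteq> (\<Union>w'\<in>g w. triadic_cube (n + int (j * k) + int k) w')"
    using H by metis
  define G where "G = (\<Union>w\<in>W. g w)"
  have "finite G" unfolding G_def using W(1) g by auto
  moreover have "card G \<le> K ^ Suc j"
  proof -
    have "card G \<le> (\<Sum>w\<in>W. card (g w))" unfolding G_def using W(1) by (rule card_UN_le)
    also have "\<dots> \<le> (\<Sum>w\<in>W. K)" using g by (intro sum_mono) auto
    also have "\<dots> = card W * K" by simp
    also have "\<dots> \<le> K ^ j * K" using W(2) by simp
    finally show ?thesis by (simp add: mult.commute)
  qed
  moreover have "triadic_cube n v \<inter> Y \<subseteq> (\<Union>w\<in>G. triadic_cube (n + int (Suc j * k)) w)"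
  proof
    fix x assume x: "x \<in> triadic_cube n v \<inter> Y"
    then obtain w where w: "w \<in> W" "x \<in> triadic_cube (n + int (j * k)) w" using W(3) by blast
    then obtain w' where w'1: "w' \<in> g w" and w'2: "x \<in> triadic_cube (n + int (j * k) + int k) w'" using g[of w] x by blast
    have e: "n + int (j * k) + int k = n + int (Suc j * k)" by simp
    have "x \<in> triadic_cube (n + int (Suc j * k)) w'" using w'2 unfolding e .
    then show "x \<in> (\<Union>w\<in>G. triadic_cube (n + int (Suc j * k)) w)" unfolding G_def using w(1) w'1 by blast
  qed
  ultimately show ?case by blast
qed

lemma exists_cube:
  fixes x :: "real ^ 'n"
  shows "\<exists>v. x \<in> triadic_cube n v"
proof -
  define u :: "int ^ 'n" where "u = (\<chi> i. \<lfloor>x $ i / sc n\<rfloor>)"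
  have s: "sc n > 0" by (rule sc_pos)
  have "\<bar>x $ i - sc n * real_of_int (u $ i)\<bar> \<le> sc n * 3 ^ 1 / 2" for i
  proof -
    have a: "real_of_int \<lfloor>x $ i / sc n\<rfloor> \<le> x $ i / sc n" "x $ i / sc n < real_of_int \<lfloor>x $ i / sc n\<rfloor> + 1"
      by (rule of_int_floor_le) (rule real_of_int_floor_add_one_gt)
    have "sc n * real_of_int \<lfloor>x $ i / sc n\<rfloor> \<le> x $ i" using mult_left_mono[OF a(1), of "sc n"] s by simp
    moreover have "x $ i < sc n * real_of_int \<lfloor>x $ i / sc n\<rfloor> + sc n" using mult_strict_left_mono[OF a(2) s] s
      by (simp add: distrib_left)
    ultimately show ?thesis unfolding u_def using s by (simp add: abs_le_iff)
  qed
  from box_cover[OF this] show ?thesis by blast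
qed

lemma cover_dim:
  fixes Y :: "(real ^ 'n) set"
  assumes p: "1 \<le> p" and k: "k \<ge> 1" and K: "K \<ge> 1"
    and H: "\<And>n v. \<exists>W. finite W \<and> card W \<le> K \<and> triadic_cube n v \<inter> Y \<subseteq> (\<Union>w\<in>W. triadic_cube (n + int k) w)"
    and s_def: "s = log 3 (real K) / real k" and s: "s > 0"
  shows "s \<in> asset p Y"
proof -
  define N where "N = real CARD('n)"
  have N1: "N \<ge> 1" unfolding N_def by simp
  define C where "C = 3 ^ CARD('n) * (3 ^ (k + 1) * N) powr s"
  have Cpos: "C > 0" unfolding C_def using N1 by simp
  have Kpow: "real K = 3 powr (real k * s)" using k K unfolding s_def by simp
  have main: "\<exists>\<U>. finite \<U> \<and> S \<subseteq> \<Union>\<U> \<and> (\<forall>U\<in>\<U>. U \<subseteq> Y \<and> lp_bounded p U \<and> lp_diam p U \<le> r) \<and>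
               real (card \<U>) \<le> C * (lp_diam p S / r) powr s"
    if S: "S \<subseteq> Y" "lp_bounded p S" and r: "0 < r" "r \<le> lp_diam p S" for S r
  proof -
    define d where "d = lp_diam p S"
    have dpos: "d > 0" using r unfolding d_def by simp
    have Sne: "S \<noteq> {}" using dpos unfolding d_def lp_diam_def by auto
    then obtain x0 where x0: "x0 \<in> S" by blast
    define n0 :: int where "n0 = - \<lceil>log 3 d\<rceil>"
    have sc0: "sc n0 = 3 powr real_of_int \<lceil>log 3 d\<rceil>" unfolding sc_def n0_def by simp
    have dsc: "d \<le> sc n0"
    proof -
      have "d = 3 powr (log 3 d)" using dpos by simp
      also have "\<dots> \<le> 3 powr real_of_int \<lceil>log 3 d\<rceil>" by (intro powr_mono) auto
      finally show ?thesis using sc0 by simp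
    qed
    have sc3d: "sc n0 \<le> 3 * d"
    proof -
      have "sc n0 \<le> 3 powr (log 3 d + 1)" unfolding sc0 using ceiling_correct[of "log 3 d"] by (intro powr_mono) auto
      also have "\<dots> = 3 * d" using dpos by (simp add: powr_add)
      finally show ?thesis .
    qed
    obtain v0 where v0: "x0 \<in> triadic_cube n0 v0" using exists_cube by blast
    have Scov: "\<exists>w\<in>Rk 1. y \<in> triadic_cube n0 (v0 + w)" if y: "y \<in> S" for y
    proof (rule box_cover)
      fix i
      have "\<bar>y $ i - x0 $ i\<bar> \<le> lp_dist p y x0" by (rule lp_coord[OF p])
      also have "\<dots> \<le> d" unfolding d_def using diam_ge[OF S(2) y x0] .
      finally have a: "\<bar>y $ i - x0 $ i\<bar> \<le> sc n0" using dsc by simp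
      have b: "\<bar>x0 $ i - sc n0 * real_of_int (v0 $ i)\<bar> \<le> sc n0 / 2" using v0 unfolding triadic_cube_iff by blast
      have "\<bar>y $ i - sc n0 * real_of_int (v0 $ i)\<bar> \<le> \<bar>y $ i - x0 $ i\<bar> + \<bar>x0 $ i - sc n0 * real_of_int (v0 $ i)\<bar>"
        by (rule abs_triangle_ineq[of "y $ i - x0 $ i" "x0 $ i - sc n0 * real_of_int (v0 $ i)", simplified])
      then show "\<bar>y $ i - sc n0 * real_of_int (v0 $ i)\<bar> \<le> sc n0 * 3 ^ 1 / 2" using a b by simp
    qed
    define a where "a = N * sc n0 / r"
    have a1: "1 \<le> a"
    proof -
      have "r \<le> sc n0" using r dsc unfolding d_def by simp
      also have "\<dots> \<le> N * sc n0" using N1 sc_pos[of n0] by (simp add: mult_le_cancel_right1)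
      finally show ?thesis unfolding a_def using r by simp
    qed
    have ex: "\<exists>j. a \<le> 3 ^ (j * k)"
    proof -
      obtain j where j: "a < 3 ^ j" using real_arch_pow[of 3 a] by auto
      have "(3::real) ^ j \<le> 3 ^ (j * k)" using k by (intro power_increasing) auto
      then have "a \<le> 3 ^ (j * k)" using j by linarith
      then show ?thesis by blast
    qed
    define j where "j = (LEAST j. a \<le> 3 ^ (j * k))"
    have j1: "a \<le> 3 ^ (j * k)" unfolding j_def using ex by (rule LeastI_ex)
    have j2: "3 ^ (j * k) \<le> 3 ^ k * a"
    proof (cases j)
      case 0
      then show ?thesis using a1 by (simp add: one_le_power order.trans[OF _ mult_left_mono[of 1 a]])
    next
      case (Suc j')
      have "\<not> a \<le> 3 ^ (j' * k)" using not_less_Least[of j' "\<lambda>j. a \<le> 3 ^ (j * k)"] Suc unfolding j_def by auto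
      then have "3 ^ (j' * k) < a" by simp
      then have "3 ^ k * 3 ^ (j' * k) \<le> 3 ^ k * a" by simp
      then show ?thesis using Suc by (simp add: power_add)
    qed
    define lev where "lev = n0 + int (j * k)"
    have sclev: "sc lev = sc n0 / 3 ^ (j * k)" unfolding lev_def by (rule sc_add)
    have diamlev: "N * sc lev \<le> r"
    proof -
      have "N * sc n0 / r \<le> 3 ^ (j * k)" using j1 unfolding a_def .
      then have "N * sc n0 \<le> 3 ^ (j * k) * r" using r by (simp add: divide_le_eq)
      then show ?thesis unfolding sclev by (simp add: divide_le_eq mult.commute)
    qed
    have "\<forall>w. \<exists>W. finite W \<and> card W \<le> K ^ j \<and> triadic_cube n0 (v0 + w) \<inter> Y \<subseteq> (\<Union>w'\<in>W. triadic_cube lev w')"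
      using iter_cover[OF H, of j n0] unfolding lev_def by blast
    then obtain Wf where Wf0: "\<forall>w. finite (Wf w) \<and> card (Wf w) \<le> K ^ j \<and> triadic_cube n0 (v0 + w) \<inter> Y \<subseteq> (\<Union>w'\<in>Wf w. triadic_cube lev w')"
      using choice[of "\<lambda>w W. finite W \<and> card W \<le> K ^ j \<and> triadic_cube n0 (v0 + w) \<inter> Y \<subseteq> (\<Union>w'\<in>W. triadic_cube lev w')"] by blast
    have Wf: "finite (Wf w) \<and> card (Wf w) \<le> K ^ j \<and> triadic_cube n0 (v0 + w) \<inter> Y \<subseteq> (\<Union>w'\<in>Wf w. triadic_cube lev w')" for w
      using Wf0 by blast
    define W where "W = (\<Union>w\<in>Rk 1. Wf w)"
    define \<U> where "\<U> = (\<lambda>w. triadic_cube lev w \<inter> Y) ` W"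
    have finW: "finite W" unfolding W_def using Rk_finite Wf by auto
    have cardW: "card W \<le> 3 ^ CARD('n) * K ^ j"
    proof -
      have "card W \<le> (\<Sum>w\<in>Rk 1. card (Wf w))" unfolding W_def by (rule card_UN_le[OF Rk_finite])
      also have "\<dots> \<le> (\<Sum>w\<in>(Rk 1 :: (int^'n) set). K ^ j)" using Wf by (intro sum_mono) auto
      also have "\<dots> = card (Rk 1 :: (int^'n) set) * K ^ j" by simp
      also have "\<dots> \<le> 3 ^ CARD('n) * K ^ j" using Rk_card[of 1, where 'n='n] by simp
      finally show ?thesis .
    qed
    have "finite \<U>" unfolding \<U>_def using finW by simp
    moreover have "S \<subseteq> \<Union>\<U>"
    proof
      fix y assume y: "y \<in> S"
      then obtain w where w: "w \<in> Rk 1" "y \<in> triadic_cube n0 (v0 + w)" using Scov by blast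
      then obtain w' where "w' \<in> Wf w" "y \<in> triadic_cube lev w'" using Wf[of w] y S(1) by blast
      then show "y \<in> \<Union>\<U>" unfolding \<U>_def W_def using w(1) y S(1) by blast
    qed
    moreover have "\<forall>U\<in>\<U>. U \<subseteq> Y \<and> lp_bounded p U \<and> lp_diam p U \<le> r"
    proof
      fix U assume "U \<in> \<U>"
      then obtain w where U: "U = triadic_cube lev w \<inter> Y" unfolding \<U>_def by blast
      have "lp_diam p U \<le> r"
      proof (cases "U = {}")
        case True then show ?thesis unfolding lp_diam_def using r by simp
      next
        case False
        show ?thesis
        proof (rule diam_le[OF False])
          fix x y assume "x \<in> U" "y \<in> U"
          then have "lp_dist p x y \<le> N * sc lev" unfolding U N_def using cube_lp[OF p] by blast
          then show "lp_dist p x y \<le> r" using diamlev by simp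
        qed
      qed
      then show "U \<subseteq> Y \<and> lp_bounded p U \<and> lp_diam p U \<le> r" unfolding U using cube_bounded[OF p] by blast
    qed
    moreover have "real (card \<U>) \<le> C * (lp_diam p S / r) powr s"
    proof -
      have "card \<U> \<le> card W" unfolding \<U>_def by (rule card_image_le[OF finW])
      then have c1: "real (card \<U>) \<le> 3 ^ CARD('n) * real K ^ j" using cardW
        by (metis (mono_tags, lifting) of_nat_le_iff of_nat_mult of_nat_numeral of_nat_power order_trans)
      have "real K ^ j = (3 powr (real k * s)) ^ j" using Kpow by simp
      also have "\<dots> = (3 ^ (j * k)) powr s"
        by (simp add: powr_realpow[symmetric] powr_powr powr_power mult.commute mult.left_commute)
      also have "\<dots> \<le> (3 ^ k * a) powr s" using j2 s by (intro powr_mono2) auto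
      also have "\<dots> \<le> (3 ^ (k + 1) * N * (d / r)) powr s"
      proof (intro powr_mono2)
        show "0 \<le> 3 ^ k * a" using a1 by simp
        have "3 ^ k * a = 3 ^ k * N * sc n0 / r" unfolding a_def by simp
        also have "\<dots> \<le> 3 ^ k * N * (3 * d) / r" using sc3d r N1
          by (intro divide_right_mono mult_left_mono) auto
        also have "\<dots> = 3 ^ (k + 1) * N * (d / r)" by simp
        finally show "3 ^ k * a \<le> 3 ^ (k + 1) * N * (d / r)" .
      qed (use s in auto)
      also have "\<dots> = (3 ^ (k + 1) * N) powr s * (d / r) powr s"
        using N1 dpos r by (subst powr_mult) auto
      finally have bd: "real K ^ j \<le> (3 ^ (k + 1) * N) powr s * (d / r) powr s" .
      have "real (card \<U>) \<le> 3 ^ CARD('n) * ((3 ^ (k + 1) * N) powr s * (d / r) powr s)"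
        using c1 mult_left_mono[OF bd, of "3 ^ CARD('n)"] by (simp add: order_trans)
      then show ?thesis unfolding C_def d_def by (simp add: mult.assoc)
    qed
    ultimately show ?thesis by blast
  qed
  show ?thesis unfolding asset_def using s Cpos main by blast
qed



definition grid :: "nat \<Rightarrow> (real ^ 'n) set" where
  "grid m = (\<lambda>g. \<chi> i. real (g i) / real m) ` (PiE UNIV (\<lambda>_. {..<m}))"

lemma grid_finite: "finite (grid m :: (real ^ 'n::finite) set)"
  unfolding grid_def by (intro finite_imageI finite_PiE) auto

lemma grid_card:
  assumes m: "m \<ge> 1"
  shows "card (grid m :: (real ^ 'n::finite) set) = m ^ CARD('n)"
proof -
  have "inj_on (\<lambda>g. (\<chi> i. real (g i) / real m) :: real ^ 'n) (PiE UNIV (\<lambda>_. {..<m}))"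
  proof (rule inj_onI)
    fix g g' :: "'n \<Rightarrow> nat"
    assume "((\<chi> i. real (g i) / real m) :: real ^ 'n) = (\<chi> i. real (g' i) / real m)"
    then have "real (g i) / real m = real (g' i) / real m" for i by (metis vec_lambda_beta)
    then have "g i = g' i" for i using m by (simp add: divide_cancel_right)
    then show "g = g'" by auto
  qed
  then have "card (grid m :: (real ^ 'n) set) = card (PiE (UNIV::'n set) (\<lambda>_. {..<m}))"
    unfolding grid_def by (rule card_image)
  also have "\<dots> = m ^ CARD('n)" by (simp add: card_PiE)
  finally show ?thesis .
qed

lemma grid_mem:
  assumes "\<sigma> \<in> grid m"
  obtains g where "\<And>i. g i < m" "\<sigma> = (\<chi> i. real (g i) / real m)"
proof -
  obtain g where g: "g \<in> PiE UNIV (\<lambda>_. {..<m})" "\<sigma> = (\<chi> i. real (g i) / real m)"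
    using assms unfolding grid_def by blast
  show thesis
  proof (rule that)
    show "g i < m" for i using g(1) by (auto simp: PiE_iff)
    show "\<sigma> = (\<chi> i. real (g i) / real m)" by (rule g(2))
  qed
qed

lemma grid_cube:
  assumes m: "m \<ge> 1" and "\<sigma> \<in> grid m"
  shows "\<sigma> \<in> (unit_cube :: (real ^ 'n) set)"
proof -
  obtain g where g: "\<And>i. g i < m" "\<sigma> = (\<chi> i. real (g i) / real m)" using grid_mem assms(2) by blast
  have "real (g i) / real m \<le> 1" for i using g(1)[of i] m by (simp add: divide_le_eq)
  then show ?thesis unfolding unit_cube_def mem_box_cart g(2) by simp
qed

lemma unit_cube_lp:
  assumes p: "1 \<le> p" and "x \<in> (unit_cube :: (real ^ 'n) set)" "y \<in> unit_cube"
  shows "lp_dist p x y \<le> real CARD('n)"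
proof -
  have "\<bar>x $ i - y $ i\<bar> \<le> 1" for i using assms(2,3) unfolding unit_cube_def mem_box_cart
    by (auto simp: abs_le_iff) (smt (verit))+
  then show ?thesis using lp_le_bound[OF p, of 1 x y] by simp
qed

lemma grid_sep:
  assumes p: "1 \<le> p" and m: "m \<ge> 1" and s: "\<sigma> \<in> grid m" "\<sigma>' \<in> grid m" and ne: "\<sigma> \<noteq> \<sigma>'"
  shows "1 / real m \<le> lp_dist p \<sigma> (\<sigma>' :: real ^ 'n)"
proof -
  obtain g where g: "\<And>i. g i < m" "\<sigma> = (\<chi> i. real (g i) / real m)" using grid_mem s(1) by blast
  obtain g' where g': "\<And>i. g' i < m" "\<sigma>' = (\<chi> i. real (g' i) / real m)" using grid_mem s(2) by blast
  have "g \<noteq> g'" using ne g(2) g'(2) by auto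
  then obtain i where i: "g i \<noteq> g' i" by (meson ext)
  have "1 \<le> \<bar>real (g i) - real (g' i)\<bar>" using i by linarith
  then have "1 / real m \<le> \<bar>real (g i) - real (g' i)\<bar> / real m" using m by (intro divide_right_mono) auto
  also have "\<dots> = \<bar>\<sigma> $ i - \<sigma>' $ i\<bar>" unfolding g(2) g'(2) by (simp add: diff_divide_distrib[symmetric])
  also have "\<dots> \<le> lp_dist p \<sigma> \<sigma>'" by (rule lp_coord[OF p])
  finally show ?thesis .
qed

lemma grid_two:
  assumes m: "m \<ge> 2"
  shows "(0 :: real ^ 'n) \<in> grid m" "(\<chi> i. 1 / real m :: real ^ 'n) \<in> grid m" "(0 :: real ^ 'n) \<noteq> (\<chi> i. 1 / real m)"
proof -
  have "(\<lambda>_. 0) \<in> PiE (UNIV :: 'n set) (\<lambda>_. {..<m})" using m by auto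
  then show "(0 :: real ^ 'n) \<in> grid m" unfolding grid_def by (rule rev_image_eqI) (simp add: vec_eq_iff)
  have "(\<lambda>_. 1) \<in> PiE (UNIV :: 'n set) (\<lambda>_. {..<m})" using m by auto
  then show "(\<chi> i. 1 / real m :: real ^ 'n) \<in> grid m" unfolding grid_def by (rule rev_image_eqI) simp
  show "(0 :: real ^ 'n) \<noteq> (\<chi> i. 1 / real m)" using m by (simp add: vec_eq_iff)
qed

definition gridAP :: "ereal \<Rightarrow> (real ^ 'n::finite) set \<Rightarrow> bool" where
  "gridAP p Y \<longleftrightarrow> (\<forall>m::nat. m \<ge> 2 \<longrightarrow> (\<exists>u>0. \<exists>f. (\<forall>\<sigma>\<in>(grid m :: (real ^ 'n) set). f \<sigma> \<in> Y) \<and>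
     (\<forall>\<sigma>\<in>grid m. \<forall>\<sigma>'\<in>grid m. \<bar>u * lp_dist p (f \<sigma>) (f \<sigma>') - lp_dist p \<sigma> \<sigma>'\<bar> \<le> 1 / (4 * real m))))"

lemma grid_count:
  fixes Y :: "(real ^ 'n) set" and f :: "real ^ 'n \<Rightarrow> real ^ 'n"
  assumes p: "1 \<le> p" and m: "m \<ge> 2" and u: "u > 0" and fY: "\<forall>\<sigma>\<in>grid m. f \<sigma> \<in> Y"
    and fd: "\<forall>\<sigma>\<in>grid m. \<forall>\<sigma>'\<in>grid m. \<bar>u * lp_dist p (f \<sigma>) (f \<sigma>') - lp_dist p \<sigma> \<sigma>'\<bar> \<le> 1 / (4 * real m)"
    and C: "C > 0" and \<beta>: "\<beta> > 0"
    and H: "\<forall>S. S \<subseteq> Y \<and> lp_bounded p S \<longrightarrow>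
       (\<forall>r. 0 < r \<and> r \<le> lp_diam p S \<longrightarrow>
          (\<exists>\<U>. finite \<U> \<and> S \<subseteq> \<Union>\<U> \<and> (\<forall>U\<in>\<U>. U \<subseteq> Y \<and> lp_bounded p U \<and> lp_diam p U \<le> r) \<and>
               real (card \<U>) \<le> C * (lp_diam p S / r) powr \<beta>))"
  shows "real m ^ CARD('n) \<le> C * (2 * (real CARD('n) + 1)) powr \<beta> * real m powr \<beta>"
proof -
  define N where "N = real CARD('n)"
  have m1: "m \<ge> 1" using m by simp
  have mpos: "real m > 0" using m by simp
  define S where "S = f ` grid m"
  have sep: "u * lp_dist p (f \<sigma>) (f \<sigma>') \<ge> 3 / (4 * real m)" if "\<sigma> \<in> grid m" "\<sigma>' \<in> grid m" "\<sigma> \<noteq> \<sigma>'" for \<sigma> \<sigma>'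
  proof -
    have "1 / real m \<le> lp_dist p \<sigma> \<sigma>'" by (rule grid_sep[OF p m1 that])
    moreover have b: "\<bar>u * lp_dist p (f \<sigma>) (f \<sigma>') - lp_dist p \<sigma> \<sigma>'\<bar> \<le> 1 / (4 * real m)" using fd that by blast
    moreover have "1 / real m - 1 / (4 * real m) = 3 / (4 * real m)" using mpos by (simp add: field_simps)
    ultimately show ?thesis using abs_ge_minus_self[of "u * lp_dist p (f \<sigma>) (f \<sigma>') - lp_dist p \<sigma> \<sigma>'"] by linarith
  qed
  have inj: "inj_on f (grid m)"
  proof (rule inj_onI, rule ccontr)
    fix \<sigma> \<sigma>' assume a: "\<sigma> \<in> grid m" "\<sigma>' \<in> grid m" "f \<sigma> = f \<sigma>'" "\<sigma> \<noteq> \<sigma>'"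
    have z: "u * lp_dist p (f \<sigma>) (f \<sigma>') = 0" using a(3) lp_eq0[OF p, of "f \<sigma>'" "f \<sigma>'"] by simp
    have "3 / (4 * real m) > 0" using mpos by simp
    then show False using sep[OF a(1,2,4)] z by linarith
  qed
  have cardS: "card S = m ^ CARD('n)" unfolding S_def using card_image[OF inj] grid_card[OF m1] by simp
  have upper: "lp_dist p x y \<le> (N + 1) / u" if xy: "x \<in> S" "y \<in> S" for x y
  proof -
    obtain \<sigma> \<sigma>' where s: "\<sigma> \<in> grid m" "\<sigma>' \<in> grid m" "x = f \<sigma>" "y = f \<sigma>'" using xy unfolding S_def by blast
    have "lp_dist p \<sigma> \<sigma>' \<le> N" unfolding N_def using unit_cube_lp[OF p grid_cube[OF m1 s(1)] grid_cube[OF m1 s(2)]] .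
    moreover have "\<bar>u * lp_dist p x y - lp_dist p \<sigma> \<sigma>'\<bar> \<le> 1 / (4 * real m)" using fd s by blast
    moreover have "1 / (4 * real m) \<le> 1" using mpos m by (simp add: field_simps)
    ultimately have "u * lp_dist p x y \<le> N + 1" by (simp add: abs_le_iff)
    then show ?thesis using u by (simp add: field_simps)
  qed
  have bS: "lp_bounded p S" unfolding lp_bounded_def using upper by blast
  have SY: "S \<subseteq> Y" unfolding S_def using fY by blast
  define d where "d = lp_diam p S"
  define r where "r = 1 / (2 * real m * u)"
  have rpos: "r > 0" unfolding r_def using u mpos by simp
  obtain g0 g1 :: "real ^ 'n" where g: "g0 \<in> grid m" "g1 \<in> grid m" "g0 \<noteq> g1" using grid_two[OF m] by blast
  have "3 / (4 * real m) \<le> u * lp_dist p (f g0) (f g1)" using sep[OF g] .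
  moreover have "lp_dist p (f g0) (f g1) \<le> d" unfolding d_def using diam_ge[OF bS] g unfolding S_def by blast
  ultimately have "3 / (4 * real m) \<le> u * d" using u by (smt (verit) mult_left_mono)
  then have rd: "r \<le> d" unfolding r_def using u mpos by (simp add: field_simps)
  obtain \<U> where U: "finite \<U>" "S \<subseteq> \<Union>\<U>" "\<forall>U\<in>\<U>. U \<subseteq> Y \<and> lp_bounded p U \<and> lp_diam p U \<le> r"
      "real (card \<U>) \<le> C * (d / r) powr \<beta>"
  proof -
    have H1: "S \<subseteq> Y \<and> lp_bounded p S \<longrightarrow> (\<forall>r. 0 < r \<and> r \<le> lp_diam p S \<longrightarrow>
          (\<exists>\<U>. finite \<U> \<and> S \<subseteq> \<Union>\<U> \<and> (\<forall>U\<in>\<U>. U \<subseteq> Y \<and> lp_bounded p U \<and> lp_diam p U \<le> r) \<and>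
               real (card \<U>) \<le> C * (lp_diam p S / r) powr \<beta>))" using H by (rule allE)
    have rd': "0 < r \<and> r \<le> lp_diam p S" using rpos rd unfolding d_def by simp
    have "\<exists>\<U>. finite \<U> \<and> S \<subseteq> \<Union>\<U> \<and> (\<forall>U\<in>\<U>. U \<subseteq> Y \<and> lp_bounded p U \<and> lp_diam p U \<le> r) \<and>
               real (card \<U>) \<le> C * (lp_diam p S / r) powr \<beta>"
      using H1[rule_format, OF conjI[OF SY bS], of r] rd' by blast
    then show ?thesis using that unfolding d_def by blast
  qed
  define h where "h x = (SOME U. U \<in> \<U> \<and> x \<in> U)" for x
  have h: "h x \<in> \<U> \<and> x \<in> h x" if "x \<in> S" for x
    unfolding h_def using U(2) that by (metis (mono_tags, lifting) UnionE someI_ex subsetD)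
  have "inj_on h S"
  proof (rule inj_onI, rule ccontr)
    fix x y assume a: "x \<in> S" "y \<in> S" "h x = h y" "x \<noteq> y"
    obtain \<sigma> \<sigma>' where s: "\<sigma> \<in> grid m" "\<sigma>' \<in> grid m" "x = f \<sigma>" "y = f \<sigma>'" using a unfolding S_def by blast
    have ne: "\<sigma> \<noteq> \<sigma>'" using a(4) s by auto
    have bh: "lp_bounded p (h x)" using U(3) h[OF a(1)] by blast
    have yh: "y \<in> h x" using h[OF a(2)] a(3) by simp
    have "lp_dist p x y \<le> lp_diam p (h x)" using diam_ge[OF bh _ yh] h[OF a(1)] by blast
    also have "\<dots> \<le> r" using h[OF a(1)] U(3) by blast
    finally have "u * lp_dist p x y \<le> u * r" using u by simp
    also have "\<dots> = 1 / (2 * real m)" unfolding r_def using u by simp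
    finally show False using sep[OF s(1,2) ne] s mpos by (simp add: field_simps)
  qed
  then have "card S \<le> card \<U>" using h U(1) by (intro card_inj_on_le) auto
  then have "real (card S) \<le> real (card \<U>)" by simp
  moreover have "real (card S) = real m ^ CARD('n)" using cardS by simp
  ultimately have "real m ^ CARD('n) \<le> C * (d / r) powr \<beta>" using U(4) by linarith
  also have "\<dots> \<le> C * (2 * (N + 1) * real m) powr \<beta>"
  proof -
    have "d \<le> (N + 1) / u"
    proof (cases "S = {}")
      case True then show ?thesis using g unfolding S_def by auto
    next
      case False then show ?thesis unfolding d_def using upper by (intro diam_le) auto
    qed
    then have du: "d * u \<le> N + 1" using u by (simp add: field_simps)
    have "d / r = (d * u) * (2 * real m)" unfolding r_def using u mpos by (simp add: field_simps)
    also have "\<dots> \<le> (N + 1) * (2 * real m)" using du mpos by (intro mult_right_mono) auto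
    also have "\<dots> = 2 * (N + 1) * real m" by (simp add: algebra_simps)
    finally have "d / r \<le> 2 * (N + 1) * real m" .
    moreover have "0 \<le> d / r" using rd rpos by simp
    ultimately show ?thesis using C \<beta> by (intro mult_left_mono powr_mono2) auto
  qed
  also have "\<dots> = C * (2 * (N + 1)) powr \<beta> * real m powr \<beta>"
    unfolding N_def by (subst powr_mult) auto
  finally show ?thesis unfolding N_def .
qed

lemma grid_lower:
  assumes p: "1 \<le> p" and ap: "gridAP p Y" and \<beta>: "\<beta> \<in> asset p (Y :: (real ^ 'n) set)"
  shows "real CARD('n) \<le> \<beta>"
proof (rule ccontr)
  assume "\<not> real CARD('n) \<le> \<beta>"
  then have lt: "\<beta> < real CARD('n)" by simp
  define N where "N = real CARD('n)"
  obtain C where C: "C > 0" and b0: "\<beta> > 0" and H: "\<forall>S. S \<subseteq> Y \<and> lp_bounded p S \<longrightarrow>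
       (\<forall>r. 0 < r \<and> r \<le> lp_diam p S \<longrightarrow>
          (\<exists>\<U>. finite \<U> \<and> S \<subseteq> \<Union>\<U> \<and> (\<forall>U\<in>\<U>. U \<subseteq> Y \<and> lp_bounded p U \<and> lp_diam p U \<le> r) \<and>
               real (card \<U>) \<le> C * (lp_diam p S / r) powr \<beta>))"
    using \<beta> unfolding asset_def by blast
  define C' where "C' = C * (2 * (N + 1)) powr \<beta>"
  have C'pos: "C' > 0" unfolding C'_def N_def using C by simp
  have bound: "real m ^ CARD('n) \<le> C' * real m powr \<beta>" if m: "m \<ge> 2" for m
  proof -
    obtain u and f :: "real ^ 'n \<Rightarrow> real ^ 'n" where u: "u > 0" and fY: "\<forall>\<sigma>\<in>grid m. f \<sigma> \<in> Y" and
      fd: "\<forall>\<sigma>\<in>grid m. \<forall>\<sigma>'\<in>grid m. \<bar>u * lp_dist p (f \<sigma>) (f \<sigma>') - lp_dist p \<sigma> \<sigma>'\<bar> \<le> 1 / (4 * real m)"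
      using ap m unfolding gridAP_def by blast
    show ?thesis using grid_count[OF p m u fY fd C b0 H] unfolding C'_def N_def .
  qed
  define t where "t = (C' + 1) powr (1 / (N - \<beta>))"
  define m where "m = nat \<lceil>t\<rceil> + 2"
  have m2: "m \<ge> 2" unfolding m_def by simp
  have tm: "t \<le> real m" unfolding m_def by linarith
  have tpos: "t > 0" unfolding t_def using C'pos by simp
  have "C' + 1 = t powr (N - \<beta>)" unfolding t_def using lt C'pos unfolding N_def by (simp add: powr_powr)
  also have "\<dots> \<le> real m powr (N - \<beta>)" using tm tpos lt unfolding N_def by (intro powr_mono2) auto
  finally have A: "C' + 1 \<le> real m powr (N - \<beta>)" .
  have mpos: "real m > 0" using m2 by simp
  have "real m ^ CARD('n) = real m powr N" unfolding N_def using mpos by (simp add: powr_realpow)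
  also have "\<dots> = real m powr (N - \<beta>) * real m powr \<beta>" by (simp add: powr_add[symmetric])
  finally have "real m ^ CARD('n) \<ge> (C' + 1) * real m powr \<beta>" using A mpos by (simp add: mult_right_mono)
  moreover have "real m powr \<beta> > 0" using mpos by simp
  ultimately show False using bound[OF m2] by (simp add: distrib_right)
qed

lemma N_in_asset:
  assumes p: "1 \<le> p"
  shows "real CARD('n) \<in> asset p (Y :: (real ^ 'n) set)"
proof -
  have H: "\<exists>W. finite W \<and> card W \<le> 3 ^ CARD('n) \<and> triadic_cube n v \<inter> Y \<subseteq> (\<Union>w\<in>W. triadic_cube (n + int 1) w)" for n v
  proof (intro exI conjI)
    show "finite (chi 1 v ` Rk 1)" by (intro finite_imageI Rk_finite)
    show "card (chi 1 v ` Rk 1) \<le> 3 ^ CARD('n)"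
      using card_image_le[OF Rk_finite, of "chi 1 v" 1] Rk_card[of 1, where 'n='n] by simp
    show "triadic_cube n v \<inter> Y \<subseteq> (\<Union>w\<in>chi 1 v ` Rk 1. triadic_cube (n + int 1) w)"
      using children_cover[of _ n v 1] by blast
  qed
  have "real CARD('n) = log 3 (real (3 ^ CARD('n))) / real (1::nat)" by simp
  then show ?thesis using cover_dim[OF p _ _ H] by simp
qed

lemma dim_le_N: "1 \<le> p \<Longrightarrow> assouad_dim p (Y :: (real ^ 'n) set) \<le> real CARD('n)"
  unfolding assouad_asset by (rule Inf_lower) (use N_in_asset in blast)

lemma dim_eq_N:
  assumes p: "1 \<le> p" and ap: "gridAP p (Y :: (real ^ 'n) set)"
  shows "assouad_dim p Y = real CARD('n)"
proof (rule antisym)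
  show "assouad_dim p Y \<le> real CARD('n)" by (rule dim_le_N[OF p])
  show "ereal (real CARD('n)) \<le> assouad_dim p Y" unfolding assouad_asset
    by (rule Inf_greatest) (use grid_lower[OF p ap] in auto)
qed

lemma gridAP_UNIV: "gridAP p UNIV"
  unfolding gridAP_def by (auto intro!: exI[of _ 1] exI[of _ id])

lemma dim_UNIV: "1 \<le> p \<Longrightarrow> assouad_dim p (UNIV :: (real ^ 'n) set) = real CARD('n)"
  using dim_eq_N gridAP_UNIV by blast



definition dense_all :: "ereal \<Rightarrow> (real ^ 'n::finite) set \<Rightarrow> bool" where
  "dense_all p F \<longleftrightarrow> (\<forall>\<epsilon>>0. \<exists>n v. \<forall>y\<in>triadic_cube n v. \<exists>x\<in>F \<inter> triadic_cube n v. lp_dist p x y \<le> \<epsilon> * sc n)"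

lemma small_pow:
  assumes "\<epsilon> > 0"
  shows "\<exists>k::nat. k \<ge> 1 \<and> real CARD('n) / 3 ^ k < \<epsilon>"
proof -
  obtain k where k: "real CARD('n) / \<epsilon> < 3 ^ k" using real_arch_pow[of 3 "real CARD('n) / \<epsilon>"] by auto
  have "(3::real) ^ k \<le> 3 ^ Suc k" by simp
  then have "real CARD('n) / \<epsilon> < 3 ^ Suc k" using k by linarith
  then have "real CARD('n) / 3 ^ Suc k < \<epsilon>" using assms by (simp add: field_simps)
  then show ?thesis by (intro exI[of _ "Suc k"]) simp
qed

lemma porous:
  fixes F :: "(real ^ 'n) set"
  assumes p: "1 \<le> p" and nd: "\<not> dense_all p F"
  shows "assouad_dim p F < real CARD('n)"
proof -
  define N where "N = real CARD('n)"
  obtain \<epsilon> where \<epsilon>: "\<epsilon> > 0" and bad: "\<And>n v. \<exists>y\<in>triadic_cube n v. \<forall>x\<in>F \<inter> triadic_cube n v. \<epsilon> * sc n < lp_dist p x y"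
    using nd unfolding dense_all_def by (auto simp: not_le)
  obtain k :: nat where k1: "k \<ge> 1" and kb: "N / 3 ^ k < \<epsilon>" using small_pow[OF \<epsilon>, where 'n='n] unfolding N_def by blast
  define K where "K = 3 ^ (k * CARD('n)) - (1::nat)"
  have big: "(3::nat) ^ (k * CARD('n)) \<ge> 3"
  proof -
    have "k * CARD('n) \<ge> 1" using k1 by simp
    then have "(3::nat) ^ 1 \<le> 3 ^ (k * CARD('n))" by (intro power_increasing) auto
    then show ?thesis by simp
  qed
  have K2: "K \<ge> 2" unfolding K_def using big by simp
  have H: "\<exists>W. finite W \<and> card W \<le> K \<and> triadic_cube n v \<inter> F \<subseteq> (\<Union>w\<in>W. triadic_cube (n + int k) w)" for n v
  proof -
    obtain y where y: "y \<in> triadic_cube n v" and yb: "\<forall>x\<in>F \<inter> triadic_cube n v. \<epsilon> * sc n < lp_dist p x y"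
      using bad by blast
    obtain w0 where w0: "w0 \<in> Rk k" "y \<in> triadic_cube (n + int k) (chi k v w0)" using children_cover[OF y] by blast
    define W where "W = chi k v ` (Rk k - {w0})"
    have "finite W" unfolding W_def by (intro finite_imageI finite_Diff Rk_finite)
    moreover have "card W \<le> K"
    proof -
      have "card W \<le> card (Rk k - {w0})" unfolding W_def by (rule card_image_le) (use Rk_finite in simp)
      also have "\<dots> = card (Rk k :: (int^'n) set) - 1" using w0(1) Rk_finite by simp
      also have "\<dots> \<le> K" unfolding K_def using Rk_card[of k, where 'n='n] by simp
      finally show ?thesis .
    qed
    moreover have "triadic_cube n v \<inter> F \<subseteq> (\<Union>w\<in>W. triadic_cube (n + int k) w)"
    proof
      fix x assume x: "x \<in> triadic_cube n v \<inter> F"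
      obtain w where w: "w \<in> Rk k" "x \<in> triadic_cube (n + int k) (chi k v w)" using children_cover x by blast
      have "w \<noteq> w0"
      proof
        assume "w = w0"
        then have "lp_dist p x y \<le> N * sc (n + int k)" unfolding N_def using cube_lp[OF p w(2)] w0(2) by blast
        also have "\<dots> = N / 3 ^ k * sc n" unfolding sc_add by simp
        also have "\<dots> \<le> \<epsilon> * sc n" using kb sc_pos[of n] by (intro mult_right_mono) auto
        finally show False using yb x by force
      qed
      then show "x \<in> (\<Union>w\<in>W. triadic_cube (n + int k) w)" unfolding W_def using w by blast
    qed
    ultimately show ?thesis by blast
  qed
  define s where "s = log 3 (real K) / real k"
  have Kr: "real K > 1" using K2 by simp
  have spos: "s > 0" unfolding s_def using Kr k1 by simp
  have "s \<in> asset p F" using cover_dim[OF p k1 _ H s_def spos] K2 by simp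
  then have le: "assouad_dim p F \<le> ereal s" unfolding assouad_asset by (rule Inf_lower[OF imageI])
  moreover have "s < N"
  proof -
    have "K < 3 ^ (k * CARD('n))" unfolding K_def using big by simp
    then have "real K < real (3 ^ (k * CARD('n)))" by (simp only: of_nat_less_iff)
    then have r1: "real K < (3::real) ^ (k * CARD('n))" by simp
    have "log 3 (real K) < log 3 ((3::real) ^ (k * CARD('n)))" using r1 Kr by (subst log_less_cancel_iff) auto
    also have "\<dots> = real k * N" unfolding N_def by simp
    finally have "log 3 (real K) < real k * N" .
    then show ?thesis unfolding s_def using k1 by (simp add: divide_less_eq mult.commute)
  qed
  then have "ereal s < ereal N" by simp
  then show ?thesis using le unfolding N_def by (rule le_less_trans[rotated])
qed

lemma cube_center:
  "(\<chi> i. sc n * real_of_int (v $ i)) \<in> triadic_cube n v"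
  unfolding triadic_cube_iff using sc_pos[of n] by simp

lemma dense_fin:
  fixes F :: "(real ^ 'n) set"
  assumes p: "1 \<le> p" and d: "dense_all p F" and \<epsilon>: "\<epsilon> > 0"
  shows "\<exists>n v A. finite A \<and> A \<subseteq> F \<inter> triadic_cube n v \<and> (\<forall>y\<in>triadic_cube n v. \<exists>x\<in>A. lp_dist p x y \<le> \<epsilon> * sc n)"
proof -
  obtain n v where nv: "\<forall>y\<in>triadic_cube n v. \<exists>x\<in>F \<inter> triadic_cube n v. lp_dist p x y \<le> \<epsilon> / 2 * sc n"
    using d \<epsilon> unfolding dense_all_def by (meson half_gt_zero)
  obtain k :: nat where kb: "real CARD('n) / 3 ^ k < \<epsilon> / 2" using small_pow[of "\<epsilon>/2", where 'n='n] \<epsilon> by auto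
  define c where "c w = ((\<chi> i. sc (n + int k) * real_of_int (chi k v w $ i)) :: real ^ 'n)" for w
  have cQ: "c w \<in> triadic_cube n v" if "w \<in> Rk k" for w
    using child_sub[OF that] cube_center unfolding c_def by blast
  have "\<forall>w\<in>Rk k. \<exists>x. x \<in> F \<inter> triadic_cube n v \<and> lp_dist p x (c w) \<le> \<epsilon> / 2 * sc n"
    using nv cQ by blast
  then obtain xs where xs: "\<forall>w\<in>Rk k. xs w \<in> F \<inter> triadic_cube n v \<and> lp_dist p (xs w) (c w) \<le> \<epsilon> / 2 * sc n"
    by metis
  define A where "A = xs ` Rk k"
  have "finite A" unfolding A_def by (intro finite_imageI Rk_finite)
  moreover have "A \<subseteq> F \<inter> triadic_cube n v" unfolding A_def using xs by blast
  moreover have "\<forall>y\<in>triadic_cube n v. \<exists>x\<in>A. lp_dist p x y \<le> \<epsilon> * sc n"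
  proof
    fix y assume y: "y \<in> triadic_cube n v"
    obtain w where w: "w \<in> Rk k" "y \<in> triadic_cube (n + int k) (chi k v w)" using children_cover[OF y] by blast
    have "lp_dist p (c w) y \<le> real CARD('n) * sc (n + int k)"
      using cube_lp[OF p _ w(2)] cube_center unfolding c_def by blast
    also have "\<dots> = real CARD('n) / 3 ^ k * sc n" unfolding sc_add by simp
    also have "\<dots> \<le> \<epsilon> / 2 * sc n" using kb sc_pos[of n] by (intro mult_right_mono) auto
    finally have a: "lp_dist p (c w) y \<le> \<epsilon> / 2 * sc n" .
    have b: "lp_dist p (xs w) (c w) \<le> \<epsilon> / 2 * sc n" using xs w(1) by blast
    have "lp_dist p (xs w) y \<le> lp_dist p (xs w) (c w) + lp_dist p (c w) y" by (rule lp_triangle[OF p])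
    also have "\<dots> \<le> \<epsilon> * sc n" using a b by simp
    finally show "\<exists>x\<in>A. lp_dist p x y \<le> \<epsilon> * sc n" unfolding A_def using w(1) by blast
  qed
  ultimately show ?thesis by blast
qed

lemma GH_to_cube:
  fixes X A :: "(real ^ 'n) set"
  assumes p: "1 \<le> p" and AX: "A \<subseteq> X" and XQ: "X \<subseteq> triadic_cube n v" and e: "\<epsilon> \<ge> 0"
    and dn: "\<forall>y\<in>triadic_cube n v. \<exists>x\<in>A. lp_dist p x y \<le> \<epsilon> * sc n"
  shows "GH_dist X (\<lambda>x y. (1 / sc n) * lp_dist p x y) (unit_cube :: (real ^ 'n) set) (lp_dist p) \<le> ereal \<epsilon>"
proof -
  define u where "u = 1 / sc n"
  have u: "u > 0" unfolding u_def using sc_pos[of n] by simp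
  have usc: "u * sc n = 1" unfolding u_def using sc_pos[of n] by simp
  define b :: "real ^ 'n" where "b = (\<chi> i. 1/2 - real_of_int (v $ i))"
  define \<alpha> where "\<alpha> x = u *\<^sub>R x + b" for x :: "real ^ 'n"
  define bb :: "real ^ 'n" where "bb = (\<chi> i. sc n * (real_of_int (v $ i) - 1/2))"
  define \<psi> where "\<psi> y = sc n *\<^sub>R y + bb" for y :: "real ^ 'n"
  have la: "lp_dist p (\<alpha> x) (\<alpha> x') = u * lp_dist p x x'" for x x' unfolding \<alpha>_def using lp_affine[OF p, of u x b x'] u by simp
  have \<alpha>\<psi>: "\<alpha> (\<psi> y) = y" for y
  proof -
    have "u * (sc n * y $ i + sc n * (real_of_int (v $ i) - 1/2)) + (1/2 - real_of_int (v $ i)) = y $ i" for i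
      using usc by (simp add: algebra_simps) (metis mult.assoc mult.commute mult_1)
    then show ?thesis unfolding \<alpha>_def \<psi>_def b_def bb_def by (simp add: vec_eq_iff)
  qed
  have \<psi>Q: "\<psi> y \<in> triadic_cube n v" if "y \<in> (unit_cube :: (real ^ 'n) set)" for y
    unfolding triadic_cube_iff
  proof
    fix i
    have y: "0 \<le> y $ i" "y $ i \<le> 1" using that unfolding unit_cube_def mem_box_cart by auto
    have "\<psi> y $ i - sc n * real_of_int (v $ i) = sc n * (y $ i - 1/2)" unfolding \<psi>_def bb_def by (simp add: algebra_simps)
    moreover have "\<bar>y $ i - 1/2\<bar> \<le> 1/2" using y by (intro abs_leI) auto
    ultimately show "\<bar>\<psi> y $ i - sc n * real_of_int (v $ i)\<bar> \<le> sc n / 2"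
      using sc_pos[of n] by (simp add: abs_mult mult_left_mono[of _ "1/2" "sc n", simplified])
  qed
  have \<alpha>C: "\<alpha> x \<in> (unit_cube :: (real ^ 'n) set)" if "x \<in> triadic_cube n v" for x
    unfolding unit_cube_def mem_box_cart
  proof
    fix i
    have a: "\<bar>x $ i - sc n * real_of_int (v $ i)\<bar> \<le> sc n / 2" using that unfolding triadic_cube_iff by blast
    have "\<alpha> x $ i = u * (x $ i - sc n * real_of_int (v $ i)) + 1/2"
      unfolding \<alpha>_def b_def using usc by (simp add: algebra_simps)
    moreover have "\<bar>u * (x $ i - sc n * real_of_int (v $ i))\<bar> \<le> 1/2"
    proof -
      have "\<bar>u * (x $ i - sc n * real_of_int (v $ i))\<bar> = u * \<bar>x $ i - sc n * real_of_int (v $ i)\<bar>" using u by (simp add: abs_mult)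
      also have "\<dots> \<le> u * (sc n / 2)" using a u by (intro mult_left_mono) auto
      also have "\<dots> = 1/2" using usc by simp
      finally show ?thesis .
    qed
    ultimately have A: "\<alpha> x $ i = u * (x $ i - sc n * real_of_int (v $ i)) + 1/2"
      "\<bar>u * (x $ i - sc n * real_of_int (v $ i))\<bar> \<le> 1/2" by blast+
    have "0 \<le> \<alpha> x $ i" "\<alpha> x $ i \<le> 1"
      using A abs_ge_self[of "u * (x $ i - sc n * real_of_int (v $ i))"]
        abs_ge_minus_self[of "u * (x $ i - sc n * real_of_int (v $ i))"] by linarith+
    then show "(0::real ^ 'n) $ i \<le> \<alpha> x $ i \<and> \<alpha> x $ i \<le> (1::real ^ 'n) $ i" by simp
  qed
  have "GH_dist X (\<lambda>x y. u * lp_dist p x y) (unit_cube :: (real ^ 'n) set) (lp_dist p) \<le> ereal \<epsilon>"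
  proof (rule GH_common[where Z = UNIV and dZ = "lp_dist p" and \<alpha> = \<alpha> and \<beta> = id])
    show "metric_on UNIV (lp_dist p)" by (rule lp_metric[OF p])
    show "inj_on \<alpha> X" unfolding \<alpha>_def using u by (intro inj_onI) simp
    show "inj_on id (unit_cube :: (real ^ 'n) set)" by simp
    show "\<exists>y\<in>unit_cube. lp_dist p (\<alpha> x) (id y) \<le> \<epsilon>" if "x \<in> X" for x
      using \<alpha>C[of x] that XQ lp_eq0[OF p, of "\<alpha> x" "\<alpha> x"] e by (intro bexI[of _ "\<alpha> x"]) auto
    show "\<exists>x\<in>X. lp_dist p (\<alpha> x) (id y) \<le> \<epsilon>" if y: "y \<in> unit_cube" for y
    proof -
      obtain x where x: "x \<in> A" "lp_dist p x (\<psi> y) \<le> \<epsilon> * sc n" using dn \<psi>Q[OF y] by blast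
      have "lp_dist p (\<alpha> x) (id y) = lp_dist p (\<alpha> x) (\<alpha> (\<psi> y))" using \<alpha>\<psi> by simp
      also have "\<dots> = u * lp_dist p x (\<psi> y)" by (rule la)
      also have "\<dots> \<le> u * (\<epsilon> * sc n)" using x(2) u by (intro mult_left_mono) auto
      also have "\<dots> = \<epsilon>" using usc by (simp add: algebra_simps)
      finally show ?thesis using x(1) AX by blast
    qed
  qed (use la e in auto)
  then show ?thesis unfolding u_def .
qed

lemma dense_tpc:
  fixes F :: "(real ^ 'n) set"
  assumes p: "1 \<le> p" and d: "dense_all p F"
  shows "in_tpc p F \<and> in_kpc p F"
proof -
  have "\<forall>i::nat. \<exists>n v A. finite A \<and> A \<subseteq> F \<inter> triadic_cube n v \<and> (\<forall>y\<in>triadic_cube n v. \<exists>x\<in>A. lp_dist p x y \<le> inverse (real (Suc i)) * sc n)"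
    using dense_fin[OF p d] by simp
  then obtain nn vv AA where nv: "\<And>i. finite (AA i) \<and> AA i \<subseteq> F \<inter> triadic_cube (nn i) (vv i) \<and>
      (\<forall>y\<in>triadic_cube (nn i) (vv i). \<exists>x\<in>AA i. lp_dist p x y \<le> inverse (real (Suc i)) * sc (nn i))"
    by metis
  define uu where "uu i = 1 / sc (nn i)" for i
  have uu: "uu i > 0" for i unfolding uu_def using sc_pos by simp
  have lim: "(\<lambda>i. ereal (inverse (real (Suc i)))) \<longlonglongrightarrow> 0"
    using tendsto_ereal[OF LIMSEQ_inverse_real_of_nat] by (simp add: zero_ereal_def)
  have b1: "GH_dist (triadic_cube (nn i) (vv i) \<inter> F) (\<lambda>x y. uu i * lp_dist p x y) (unit_cube :: (real ^ 'n) set) (lp_dist p)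
      \<le> ereal (inverse (real (Suc i)))" for i
    unfolding uu_def using nv[of i] by (intro GH_to_cube[OF p, of "AA i"]) auto
  have b2: "GH_dist (AA i) (\<lambda>x y. uu i * lp_dist p x y) (unit_cube :: (real ^ 'n) set) (lp_dist p)
      \<le> ereal (inverse (real (Suc i)))" for i
    unfolding uu_def using nv[of i] by (intro GH_to_cube[OF p, of "AA i"]) auto
  have t1: "(\<lambda>i. GH_dist (triadic_cube (nn i) (vv i) \<inter> F) (\<lambda>x y. uu i * lp_dist p x y) (unit_cube :: (real ^ 'n) set) (lp_dist p)) \<longlonglongrightarrow> 0"
    by (rule tendsto_sandwich[OF always_eventually always_eventually tendsto_const lim]) (intro allI GH_nonneg b1)+
  have t2: "(\<lambda>i. GH_dist (AA i) (\<lambda>x y. uu i * lp_dist p x y) (unit_cube :: (real ^ 'n) set) (lp_dist p)) \<longlonglongrightarrow> 0"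
    by (rule tendsto_sandwich[OF always_eventually always_eventually tendsto_const lim]) (intro allI GH_nonneg b2)+
  have "in_tpc p F" unfolding in_tpc_def using uu t1 by blast
  moreover have "in_kpc p F" unfolding in_kpc_def
    using uu t2 nv finite_imp_compact by (intro exI[of _ AA] exI[of _ uu]) blast
  ultimately show ?thesis ..
qed

lemma dense_steinhaus:
  fixes F :: "(real ^ 'n) set"
  assumes p: "1 \<le> p" and d: "dense_all p F"
  shows "asymptotic_steinhaus p F"
  unfolding asymptotic_steinhaus_def
proof (intro allI impI)
  fix \<epsilon> :: real and S :: "(real ^ 'n) set"
  assume \<epsilon>: "\<epsilon> > 0" and S: "finite S \<and> S \<subseteq> unit_cube"
  obtain n v A where A: "finite A" "A \<subseteq> F \<inter> triadic_cube n v" "\<forall>y\<in>triadic_cube n v. \<exists>x\<in>A. lp_dist p x y \<le> \<epsilon> * sc n"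
    using dense_fin[OF p d \<epsilon>] by blast
  define \<delta> where "\<delta> = sc n"
  have \<delta>: "\<delta> > 0" unfolding \<delta>_def by (rule sc_pos)
  define bb :: "real ^ 'n" where "bb = (\<chi> i. sc n * (real_of_int (v $ i) - 1/2))"
  define \<psi> where "\<psi> y = sc n *\<^sub>R y + bb" for y :: "real ^ 'n"
  have \<psi>Q: "\<psi> y \<in> triadic_cube n v" if "y \<in> (unit_cube :: (real ^ 'n) set)" for y
    unfolding triadic_cube_iff
  proof
    fix i
    have y: "0 \<le> y $ i" "y $ i \<le> 1" using that unfolding unit_cube_def mem_box_cart by auto
    have "\<psi> y $ i - sc n * real_of_int (v $ i) = sc n * (y $ i - 1/2)" unfolding \<psi>_def bb_def by (simp add: algebra_simps)
    moreover have "\<bar>y $ i - 1/2\<bar> \<le> 1/2" using y by (intro abs_leI) auto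
    ultimately show "\<bar>\<psi> y $ i - sc n * real_of_int (v $ i)\<bar> \<le> sc n / 2"
      using sc_pos[of n] by (simp add: abs_mult mult_left_mono[of _ "1/2" "sc n", simplified])
  qed
  have "\<forall>\<sigma>\<in>S. \<exists>x. x \<in> A \<and> lp_dist p x (\<psi> \<sigma>) \<le> \<epsilon> * sc n" using A(3) \<psi>Q S by blast
  then obtain xs where xs: "\<forall>\<sigma>\<in>S. xs \<sigma> \<in> A \<and> lp_dist p (xs \<sigma>) (\<psi> \<sigma>) \<le> \<epsilon> * sc n" by metis
  define T where "T = xs ` S"
  have "GH_dist T (lp_dist p) S (\<lambda>x y. \<delta> * lp_dist p x y) \<le> ereal (\<epsilon> * sc n)"
  proof (rule GH_common[where Z = UNIV and dZ = "lp_dist p" and \<alpha> = id and \<beta> = \<psi>])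
    show "metric_on UNIV (lp_dist p)" by (rule lp_metric[OF p])
    show "inj_on \<psi> S" unfolding \<psi>_def using sc_pos[of n] by (intro inj_onI) simp
    show "\<delta> * lp_dist p y y' = lp_dist p (\<psi> y) (\<psi> y')" for y y'
      unfolding \<psi>_def \<delta>_def using lp_affine[OF p, of "sc n" y bb y'] sc_pos[of n] by simp
    show "\<exists>y\<in>S. lp_dist p (id x) (\<psi> y) \<le> \<epsilon> * sc n" if "x \<in> T" for x
      using that xs unfolding T_def by auto
    show "\<exists>x\<in>T. lp_dist p (id x) (\<psi> y) \<le> \<epsilon> * sc n" if "y \<in> S" for y
      using that xs unfolding T_def by auto
  qed (use \<epsilon> sc_pos[of n] in auto)
  moreover have "finite T" unfolding T_def using S by simp
  moreover have "T \<subseteq> F" unfolding T_def using xs A(2) by blast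
  ultimately show "\<exists>T \<delta>. finite T \<and> T \<subseteq> F \<and> \<delta> > 0 \<and>
          GH_dist T (lp_dist p) S (\<lambda>x y. \<delta> * lp_dist p x y) \<le> ereal (\<delta> * \<epsilon>)"
    using \<delta> unfolding \<delta>_def by (intro exI[of _ T] exI[of _ "sc n"]) (simp add: mult.commute)
qed

lemma pc_AP:
  fixes F :: "(real ^ 'n) set"
  assumes p: "1 \<le> p" and pc: "in_pc p F"
  shows "gridAP p F"
  unfolding gridAP_def
proof (intro allI impI)
  fix m :: nat assume m: "m \<ge> 2"
  obtain A u where Au: "\<forall>i. A i \<subseteq> F \<and> u i > 0"
    and t: "(\<lambda>i. GH_dist (A i) (\<lambda>x y. u i * lp_dist p x y) (unit_cube :: (real ^ 'n) set) (lp_dist p)) \<longlonglongrightarrow> 0"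
    using pc unfolding in_pc_def by blast
  have "0 < ereal (1 / (8 * real m))" using m by simp
  from order_tendstoD(2)[OF t this] obtain i where
    i: "GH_dist (A i) (\<lambda>x y. u i * lp_dist p x y) (unit_cube :: (real ^ 'n) set) (lp_dist p) < ereal (1 / (8 * real m))"
    by (meson eventually_sequentially order.refl)
  obtain f where f: "\<forall>y\<in>(unit_cube :: (real ^ 'n) set). f y \<in> A i \<and>
      (\<forall>y'\<in>unit_cube. \<bar>u i * lp_dist p (f y) (f y') - lp_dist p y y'\<bar> < 2 * (1 / (8 * real m)))"
    using GH_extract[OF i] by blast
  have gc: "\<sigma> \<in> (unit_cube :: (real ^ 'n) set)" if "\<sigma> \<in> grid m" for \<sigma> using grid_cube[OF _ that] m by simp
  have e: "2 * (1 / (8 * real m)) = 1 / (4 * real m)" by simp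
  show "\<exists>u>0. \<exists>f. (\<forall>\<sigma>\<in>(grid m :: (real ^ 'n) set). f \<sigma> \<in> F) \<and>
     (\<forall>\<sigma>\<in>grid m. \<forall>\<sigma>'\<in>grid m. \<bar>u * lp_dist p (f \<sigma>) (f \<sigma>') - lp_dist p \<sigma> \<sigma>'\<bar> \<le> 1 / (4 * real m))"
  proof (intro exI conjI ballI)
    show "u i > 0" using Au by blast
    show "f \<sigma> \<in> F" if "\<sigma> \<in> grid m" for \<sigma> using f gc[OF that] Au by blast
    show "\<bar>u i * lp_dist p (f \<sigma>) (f \<sigma>') - lp_dist p \<sigma> \<sigma>'\<bar> \<le> 1 / (4 * real m)"
      if "\<sigma> \<in> grid m" "\<sigma>' \<in> grid m" for \<sigma> \<sigma>'
      using f gc[OF that(1)] gc[OF that(2)] unfolding e by (meson less_imp_le)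
  qed
qed

lemma steinhaus_AP:
  fixes F :: "(real ^ 'n) set"
  assumes p: "1 \<le> p" and st: "asymptotic_steinhaus p F"
  shows "gridAP p F"
  unfolding gridAP_def
proof (intro allI impI)
  fix m :: nat assume m: "m \<ge> 2"
  have mpos: "real m > 0" using m by simp
  have S: "finite (grid m :: (real ^ 'n) set) \<and> (grid m :: (real ^ 'n) set) \<subseteq> unit_cube"
  proof -
    have m1: "m \<ge> 1" using m by simp
    show ?thesis using grid_finite grid_cube[OF m1] by blast
  qed
  obtain T \<delta> where T: "finite T" "T \<subseteq> F" "\<delta> > 0"
    and gh: "GH_dist T (lp_dist p) (grid m :: (real ^ 'n) set) (\<lambda>x y. \<delta> * lp_dist p x y) \<le> ereal (\<delta> * (1 / (16 * real m)))"
  proof -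
    have e': "1 / (16 * real m) > 0" using mpos by simp
    show ?thesis using st[unfolded asymptotic_steinhaus_def, rule_format, OF e' S] that by blast
  qed
  have "ereal (\<delta> * (1 / (16 * real m))) < ereal (\<delta> / (8 * real m))" using T(3) mpos by (simp add: field_simps)
  then have gh': "GH_dist T (lp_dist p) (grid m :: (real ^ 'n) set) (\<lambda>x y. \<delta> * lp_dist p x y) < ereal (\<delta> / (8 * real m))"
    using gh by (rule le_less_trans[rotated])
  obtain f where f: "\<forall>y\<in>(grid m :: (real ^ 'n) set). f y \<in> T \<and>
      (\<forall>y'\<in>grid m. \<bar>lp_dist p (f y) (f y') - \<delta> * lp_dist p y y'\<bar> < 2 * (\<delta> / (8 * real m)))"
    using GH_extract[OF gh'] by blast
  show "\<exists>u>0. \<exists>f. (\<forall>\<sigma>\<in>(grid m :: (real ^ 'n) set). f \<sigma> \<in> F) \<and>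
     (\<forall>\<sigma>\<in>grid m. \<forall>\<sigma>'\<in>grid m. \<bar>u * lp_dist p (f \<sigma>) (f \<sigma>') - lp_dist p \<sigma> \<sigma>'\<bar> \<le> 1 / (4 * real m))"
  proof (intro exI conjI ballI)
    show "1 / \<delta> > 0" using T(3) by simp
    show "f \<sigma> \<in> F" if "\<sigma> \<in> grid m" for \<sigma> using f that T(2) by blast
    show "\<bar>1 / \<delta> * lp_dist p (f \<sigma>) (f \<sigma>') - lp_dist p \<sigma> \<sigma>'\<bar> \<le> 1 / (4 * real m)"
      if "\<sigma> \<in> grid m" "\<sigma>' \<in> grid m" for \<sigma> \<sigma>'
    proof -
      have a: "\<bar>lp_dist p (f \<sigma>) (f \<sigma>') - \<delta> * lp_dist p \<sigma> \<sigma>'\<bar> < 2 * (\<delta> / (8 * real m))" using f that by blast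
      have eq: "1 / \<delta> * lp_dist p (f \<sigma>) (f \<sigma>') - lp_dist p \<sigma> \<sigma>' = (lp_dist p (f \<sigma>) (f \<sigma>') - \<delta> * lp_dist p \<sigma> \<sigma>') / \<delta>"
        using T(3) by (simp add: field_simps)
      have "\<bar>1 / \<delta> * lp_dist p (f \<sigma>) (f \<sigma>') - lp_dist p \<sigma> \<sigma>'\<bar> = (1 / \<delta>) * \<bar>lp_dist p (f \<sigma>) (f \<sigma>') - \<delta> * lp_dist p \<sigma> \<sigma>'\<bar>"
        unfolding eq using T(3) by (simp add: abs_divide)
      also have "\<dots> \<le> (1 / \<delta>) * (2 * (\<delta> / (8 * real m)))" using a T(3) by (intro mult_left_mono) auto
      also have "\<dots> = 1 / (4 * real m)" using T(3) by simp
      finally show ?thesis .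
    qed
  qed
qed

lemma tpc_pc:
  fixes F :: "(real ^ 'n) set"
  assumes "in_tpc p F" shows "in_pc p F"
proof -
  obtain n v u where u: "\<forall>i. u i > 0" and t: "(\<lambda>i. GH_dist (triadic_cube (n i) (v i) \<inter> F) (\<lambda>x y. u i * lp_dist p x y)
                    (unit_cube :: (real ^ 'n) set) (lp_dist p)) \<longlonglongrightarrow> 0"
    using assms unfolding in_tpc_def by blast
  show ?thesis unfolding in_pc_def
    by (rule exI[of _ "\<lambda>i. triadic_cube (n i) (v i) \<inter> F"], rule exI[of _ u]) (use u t in simp)
qed

lemma kpc_pc:
  fixes F :: "(real ^ 'n) set"
  assumes "in_kpc p F" shows "in_pc p F"
proof -
  obtain A u where Au: "\<forall>i. A i \<subseteq> F \<and> compact (A i) \<and> u i > 0" and t: "(\<lambda>i. GH_dist (A i) (\<lambda>x y. u i * lp_dist p x y)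
                    (unit_cube :: (real ^ 'n) set) (lp_dist p)) \<longlonglongrightarrow> 0"
    using assms unfolding in_kpc_def by blast
  show ?thesis unfolding in_pc_def
    by (rule exI[of _ A], rule exI[of _ u]) (use Au t in simp)
qed

theorem corollary5p9:
  fixes p :: ereal and F :: "(real ^ 'n) set"
  assumes "1 \<le> p"
  shows "(assouad_dim p F = assouad_dim p (UNIV :: (real ^ 'n) set) \<longleftrightarrow> in_pc p F)
       \<and> (in_pc p F \<longleftrightarrow> in_tpc p F)
       \<and> (in_tpc p F \<longleftrightarrow> in_kpc p F)
       \<and> (in_kpc p F \<longleftrightarrow> asymptotic_steinhaus p F)"
proof -
  have p: "1 \<le> p" by (rule assms)
  have dimU: "assouad_dim p (UNIV :: (real ^ 'n) set) = real CARD('n)" by (rule dim_UNIV[OF p])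
  have E1: "assouad_dim p F = assouad_dim p (UNIV :: (real ^ 'n) set) \<longleftrightarrow> dense_all p F"
  proof
    assume eq: "assouad_dim p F = assouad_dim p (UNIV :: (real ^ 'n) set)"
    show "dense_all p F"
    proof (rule ccontr)
      assume "\<not> dense_all p F"
      then have "assouad_dim p F < real CARD('n)" by (rule porous[OF p])
      then show False using eq dimU by simp
    qed
  next
    assume d: "dense_all p F"
    have "in_tpc p F" using dense_tpc[OF p d] by blast
    then have "in_pc p F" by (rule tpc_pc)
    then have "assouad_dim p F = real CARD('n)" by (rule dim_eq_N[OF p pc_AP[OF p]])
    then show "assouad_dim p F = assouad_dim p (UNIV :: (real ^ 'n) set)" using dimU by simp
  qed
  have pc_dense: "dense_all p F" if pc: "in_pc p F"
  proof -
    have "assouad_dim p F = real CARD('n)" by (rule dim_eq_N[OF p pc_AP[OF p pc]])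
    then show ?thesis using E1 dimU by simp
  qed
  have st_dense: "dense_all p F" if st: "asymptotic_steinhaus p F"
  proof -
    have "assouad_dim p F = real CARD('n)" by (rule dim_eq_N[OF p steinhaus_AP[OF p st]])
    then show ?thesis using E1 dimU by simp
  qed
  show ?thesis
    using E1 tpc_pc[of p F] kpc_pc[of p F] pc_dense st_dense dense_tpc[OF p] dense_steinhaus[OF p] by blast
qed


end
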